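(* Let $R$ be a graded polynomial ring over $\mathbb F_2$ and let $0\to A\xrightarrow{\alpha}B\to C\to0$ be a short exact sequence of free differential graded $R$-modules such that $H_*(A)$ and $H_*(B)$ are free $R$-modules. Then the short exact sequence $$0\to\operatorname{coker}\alpha_*\to H_*(C)\to\ker\alpha_*\to0$$ derived from the long exact homology sequence (with $\alpha_*:H_*(A)\to H_*(B)$) splits as a sequence of $R$-modules. *)

theory Defs
  imports Main "HOL-Library.Poly_Mapping" "HOL-Library.Z2"
begin

text \<open>Polynomials over F_2 (type bit) in the variables x_v, v :: nat; monomials are
  finitely supported exponent vectors.  The ring R consists of the polynomials whose
  monomials only involve variables from the finite set V; the variable x_v has degree w v.\<close>

type_synonym rpoly = "(nat \<Rightarrow>\<^sub>0 nat) \<Rightarrow>\<^sub>0 bit"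

definition mdeg :: "(nat \<Rightarrow> int) \<Rightarrow> (nat \<Rightarrow>\<^sub>0 nat) \<Rightarrow> int" where
  "mdeg w m = (\<Sum>v\<in>Poly_Mapping.keys m. int (Poly_Mapping.lookup m v) * w v)"

text \<open>Homogeneous elements of R of degree i (0 is homogeneous of every degree).\<close>
definition Rh :: "nat set \<Rightarrow> (nat \<Rightarrow> int) \<Rightarrow> int \<Rightarrow> rpoly set" where
  "Rh V w i = {p. \<forall>m\<in>Poly_Mapping.keys p. Poly_Mapping.keys m \<subseteq> V \<and> mdeg w m = i}"

definition graded_poly_ring :: "nat set \<Rightarrow> (nat \<Rightarrow> int) \<Rightarrow> bool" where
  "graded_poly_ring V w \<longleftrightarrow> finite V \<and> ((\<forall>v\<in>V. w v > 0) \<or> (\<forall>v\<in>V. w v < 0))"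

text \<open>A graded module is given by its homogeneous components cmp k, the addition and zero
  in each degree, and the action gact i r k x of a homogeneous r of degree i on
  x of degree k (result in degree i + k).\<close>

record 'a gmod =
  cmp :: "int \<Rightarrow> 'a set"
  gadd :: "int \<Rightarrow> 'a \<Rightarrow> 'a \<Rightarrow> 'a"
  gzero :: "int \<Rightarrow> 'a"
  gact :: "int \<Rightarrow> rpoly \<Rightarrow> int \<Rightarrow> 'a \<Rightarrow> 'a"

definition gmodule :: "nat set \<Rightarrow> (nat \<Rightarrow> int) \<Rightarrow> 'a gmod \<Rightarrow> bool" where
  "gmodule V w M \<longleftrightarrow>
     (\<forall>k. gzero M k \<in> cmp M k) \<and>
     (\<forall>k. \<forall>x\<in>cmp M k. \<forall>y\<in>cmp M k. gadd M k x y \<in> cmp M k) \<and>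
     (\<forall>k. \<forall>x\<in>cmp M k. \<forall>y\<in>cmp M k. \<forall>z\<in>cmp M k.
         gadd M k (gadd M k x y) z = gadd M k x (gadd M k y z)) \<and>
     (\<forall>k. \<forall>x\<in>cmp M k. \<forall>y\<in>cmp M k. gadd M k x y = gadd M k y x) \<and>
     (\<forall>k. \<forall>x\<in>cmp M k. gadd M k (gzero M k) x = x) \<and>
     (\<forall>k. \<forall>x\<in>cmp M k. \<exists>y\<in>cmp M k. gadd M k x y = gzero M k) \<and>
     (\<forall>i r k x. r \<in> Rh V w i \<and> x \<in> cmp M k \<longrightarrow> gact M i r k x \<in> cmp M (i + k)) \<and>
     (\<forall>i r s k x. r \<in> Rh V w i \<and> s \<in> Rh V w i \<and> x \<in> cmp M k \<longrightarrow>
         gact M i (r + s) k x = gadd M (i + k) (gact M i r k x) (gact M i s k x)) \<and>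
     (\<forall>i r k x y. r \<in> Rh V w i \<and> x \<in> cmp M k \<and> y \<in> cmp M k \<longrightarrow>
         gact M i r k (gadd M k x y) = gadd M (i + k) (gact M i r k x) (gact M i r k y)) \<and>
     (\<forall>i j r s k x. r \<in> Rh V w i \<and> s \<in> Rh V w j \<and> x \<in> cmp M k \<longrightarrow>
         gact M (i + j) (r * s) k x = gact M i r (j + k) (gact M j s k x)) \<and>
     (\<forall>k x. x \<in> cmp M k \<longrightarrow> gact M 0 1 k x = x)"

definition ghom :: "nat set \<Rightarrow> (nat \<Rightarrow> int) \<Rightarrow> 'a gmod \<Rightarrow> 'b gmod \<Rightarrow> int
                    \<Rightarrow> (int \<Rightarrow> 'a \<Rightarrow> 'b) \<Rightarrow> bool" where
  "ghom V w M N e f \<longleftrightarrow>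
     (\<forall>k x. x \<in> cmp M k \<longrightarrow> f k x \<in> cmp N (k + e)) \<and>
     (\<forall>k x y. x \<in> cmp M k \<and> y \<in> cmp M k \<longrightarrow>
         f k (gadd M k x y) = gadd N (k + e) (f k x) (f k y)) \<and>
     (\<forall>i r k x. r \<in> Rh V w i \<and> x \<in> cmp M k \<longrightarrow>
         f (i + k) (gact M i r k x) = gact N i r (k + e) (f k x))"

text \<open>Differential graded R-modules (differential of degree -1; over F_2 no signs occur).\<close>
definition dgmodule :: "nat set \<Rightarrow> (nat \<Rightarrow> int) \<Rightarrow> 'a gmod \<Rightarrow> (int \<Rightarrow> 'a \<Rightarrow> 'a) \<Rightarrow> bool" where
  "dgmodule V w M d \<longleftrightarrow> gmodule V w M \<and> ghom V w M M (-1) d \<and>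
     (\<forall>k x. x \<in> cmp M k \<longrightarrow> d (k - 1) (d k x) = gzero M (k - 2))"

text \<open>Free graded modules: existence of a homogeneous basis (bas j = basis elements of degree j).\<close>
fun lincomb :: "'a gmod \<Rightarrow> int \<Rightarrow> (int \<times> 'a \<times> rpoly) list \<Rightarrow> 'a" where
  "lincomb M k [] = gzero M k"
| "lincomb M k ((j, b, r) # xs) = gadd M k (gact M (k - j) r j b) (lincomb M k xs)"

definition gfree :: "nat set \<Rightarrow> (nat \<Rightarrow> int) \<Rightarrow> 'a gmod \<Rightarrow> bool" where
  "gfree V w M \<longleftrightarrow> (\<exists>bas :: int \<Rightarrow> 'a set.
     (\<forall>j. bas j \<subseteq> cmp M j) \<and>
     (\<forall>k x. x \<in> cmp M k \<longrightarrow>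
        (\<exists>xs. (\<forall>(j, b, r)\<in>set xs. b \<in> bas j \<and> r \<in> Rh V w (k - j)) \<and> x = lincomb M k xs)) \<and>
     (\<forall>k xs. (\<forall>(j, b, r)\<in>set xs. b \<in> bas j \<and> r \<in> Rh V w (k - j)) \<and>
        distinct (map (\<lambda>(j, b, r). (j, b)) xs) \<and> lincomb M k xs = gzero M k \<longrightarrow>
        (\<forall>(j, b, r)\<in>set xs. r = 0)))"

definition zcyc :: "'a gmod \<Rightarrow> (int \<Rightarrow> 'a \<Rightarrow> 'a) \<Rightarrow> int \<Rightarrow> 'a set" where
  "zcyc M d k = {z \<in> cmp M k. d k z = gzero M (k - 1)}"

definition bdry :: "'a gmod \<Rightarrow> (int \<Rightarrow> 'a \<Rightarrow> 'a) \<Rightarrow> int \<Rightarrow> 'a set" where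
  "bdry M d k = d (k + 1) ` cmp M (k + 1)"

text \<open>The homology class of a cycle z of degree k: the coset z + B_k.\<close>
definition hcls :: "'a gmod \<Rightarrow> (int \<Rightarrow> 'a \<Rightarrow> 'a) \<Rightarrow> int \<Rightarrow> 'a \<Rightarrow> 'a set" where
  "hcls M d k z = {gadd M k z b | b. b \<in> bdry M d k}"

definition homology :: "'a gmod \<Rightarrow> (int \<Rightarrow> 'a \<Rightarrow> 'a) \<Rightarrow> 'a set gmod" where
  "homology M d =
     \<lparr> cmp = (\<lambda>k. hcls M d k ` zcyc M d k),
       gadd = (\<lambda>k X Y. hcls M d k (gadd M k (SOME x. x \<in> X) (SOME y. y \<in> Y))),
       gzero = (\<lambda>k. hcls M d k (gzero M k)),
       gact = (\<lambda>i r k X. hcls M d (i + k) (gact M i r k (SOME x. x \<in> X))) \<rparr>"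

definition hmap :: "'b gmod \<Rightarrow> (int \<Rightarrow> 'b \<Rightarrow> 'b) \<Rightarrow> int \<Rightarrow> (int \<Rightarrow> 'a \<Rightarrow> 'b)
                    \<Rightarrow> int \<Rightarrow> 'a set \<Rightarrow> 'b set" where
  "hmap N dN e f k X = hcls N dN (k + e) (f k (SOME x. x \<in> X))"

definition chain_map :: "'a gmod \<Rightarrow> (int \<Rightarrow> 'a \<Rightarrow> 'a) \<Rightarrow> (int \<Rightarrow> 'b \<Rightarrow> 'b)
                         \<Rightarrow> (int \<Rightarrow> 'a \<Rightarrow> 'b) \<Rightarrow> bool" where
  "chain_map M dM dN f \<longleftrightarrow> (\<forall>k x. x \<in> cmp M k \<longrightarrow> dN k (f k x) = f (k - 1) (dM k x))"

definition dg_ses :: "nat set \<Rightarrow> (nat \<Rightarrow> int) \<Rightarrow>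
     'a gmod \<Rightarrow> (int \<Rightarrow> 'a \<Rightarrow> 'a) \<Rightarrow> 'b gmod \<Rightarrow> (int \<Rightarrow> 'b \<Rightarrow> 'b) \<Rightarrow> 'c gmod \<Rightarrow> (int \<Rightarrow> 'c \<Rightarrow> 'c)
     \<Rightarrow> (int \<Rightarrow> 'a \<Rightarrow> 'b) \<Rightarrow> (int \<Rightarrow> 'b \<Rightarrow> 'c) \<Rightarrow> bool" where
  "dg_ses V w A dA B dB C dC \<alpha> \<beta> \<longleftrightarrow>
     dgmodule V w A dA \<and> dgmodule V w B dB \<and> dgmodule V w C dC \<and>
     ghom V w A B 0 \<alpha> \<and> ghom V w B C 0 \<beta> \<and>
     chain_map A dA dB \<alpha> \<and> chain_map B dB dC \<beta> \<and>
     (\<forall>k. inj_on (\<alpha> k) (cmp A k)) \<and>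
     (\<forall>k. \<beta> k ` cmp B k = cmp C k) \<and>
     (\<forall>k. {b \<in> cmp B k. \<beta> k b = gzero C k} = \<alpha> k ` cmp A k)"

text \<open>Connecting homomorphism H_k(C) -> H_{k-1}(A): lift c to b, then d b = alpha(a).\<close>
definition connecting :: "'a gmod \<Rightarrow> (int \<Rightarrow> 'a \<Rightarrow> 'a) \<Rightarrow> 'b gmod \<Rightarrow> (int \<Rightarrow> 'b \<Rightarrow> 'b)
     \<Rightarrow> (int \<Rightarrow> 'a \<Rightarrow> 'b) \<Rightarrow> (int \<Rightarrow> 'b \<Rightarrow> 'c) \<Rightarrow> int \<Rightarrow> 'c set \<Rightarrow> 'a set" where
  "connecting A dA B dB \<alpha> \<beta> k X =
     hcls A dA (k - 1)
       (SOME a. a \<in> cmp A (k - 1) \<and>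
          \<alpha> (k - 1) a = dB k (SOME b. b \<in> cmp B k \<and> \<beta> k b = (SOME c. c \<in> X)))"

definition ker_hmap :: "'a gmod \<Rightarrow> (int \<Rightarrow> 'a \<Rightarrow> 'a) \<Rightarrow> 'b gmod \<Rightarrow> (int \<Rightarrow> 'b \<Rightarrow> 'b)
     \<Rightarrow> (int \<Rightarrow> 'a \<Rightarrow> 'b) \<Rightarrow> 'a set gmod" where
  "ker_hmap A dA B dB \<alpha> =
     (homology A dA)\<lparr> cmp := (\<lambda>k. {X \<in> cmp (homology A dA) k.
                                  hmap B dB 0 \<alpha> k X = gzero (homology B dB) k}) \<rparr>"

end

theory Submission
  imports Defs "HOL-Library.Multiset"
begin

lemma mdeg_add: "mdeg w (m1 + m2) = mdeg w m1 + mdeg w m2"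
  unfolding mdeg_def
  by (rule setsum_keys_plus_distrib) (auto simp: algebra_simps)
lemma Rh_mult: "r \<in> Rh V w i \<Longrightarrow> s \<in> Rh V w j \<Longrightarrow> r * s \<in> Rh V w (i + j)"
proof -
  assume r: "r \<in> Rh V w i" and s: "s \<in> Rh V w j"
  show ?thesis unfolding Rh_def mem_Collect_eq
  proof
    fix m assume "m \<in> Poly_Mapping.keys (r * s)"
    hence "m \<in> {a + b | a b. a \<in> Poly_Mapping.keys r \<and> b \<in> Poly_Mapping.keys s}"
      using keys_mult[of r s] by (rule subsetD[rotated])
    then obtain a b where m: "m = a + b" and a: "a \<in> Poly_Mapping.keys r" and b: "b \<in> Poly_Mapping.keys s"
      by (auto simp only: mem_Collect_eq)
    have k: "Poly_Mapping.keys m \<subseteq> Poly_Mapping.keys a \<union> Poly_Mapping.keys b"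
      unfolding m by (rule keys_add)
    have "Poly_Mapping.keys a \<subseteq> V" "Poly_Mapping.keys b \<subseteq> V" "mdeg w a = i" "mdeg w b = j"
      using a b r s unfolding Rh_def by auto
    hence "Poly_Mapping.keys m \<subseteq> V" "mdeg w m = i + j"
      using k m mdeg_add[of w a b] by auto
    thus "Poly_Mapping.keys m \<subseteq> V \<and> mdeg w m = i + j" by blast
  qed
qed



lemma one_plus_one_rpoly: "(1::rpoly) + 1 = 0"
proof -
  have "(1::bit) + 1 = 0" by (metis bit_2_eq_0 one_add_one)
  hence "Poly_Mapping.single (0::nat\<Rightarrow>\<^sub>0nat) ((1::bit) + 1) = 0" by simp
  thus ?thesis by (simp only: single_add single_one)
qed

lemma two_rpoly[simp]: "(2::rpoly) = 0"
  by (metis one_plus_one_rpoly one_add_one)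

lemma Rh_zero[simp]: "0 \<in> Rh V w i"
  by (simp add: Rh_def)

lemma Rh_one[simp]: "1 \<in> Rh V w 0"
  by (simp add: Rh_def mdeg_def)

lemma Rh_add: "r \<in> Rh V w i \<Longrightarrow> s \<in> Rh V w i \<Longrightarrow> r + s \<in> Rh V w i"
  unfolding Rh_def using keys_add[of r s] by blast

locale gm =
  fixes V :: "nat set" and w :: "nat \<Rightarrow> int" and M :: "'a gmod"
  assumes gmod: "gmodule V w M"
begin

lemmas ax = gmod[unfolded gmodule_def]

lemma zero_in[simp]: "gzero M k \<in> cmp M k"
  using ax[THEN conjunct1] by blast
lemma add_in[simp]: "x \<in> cmp M k \<Longrightarrow> y \<in> cmp M k \<Longrightarrow> gadd M k x y \<in> cmp M k"
  using ax[THEN conjunct2, THEN conjunct1] by blast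
lemma assoc: "x \<in> cmp M k \<Longrightarrow> y \<in> cmp M k \<Longrightarrow> z \<in> cmp M k \<Longrightarrow>
   gadd M k (gadd M k x y) z = gadd M k x (gadd M k y z)"
  using ax[THEN conjunct2, THEN conjunct2, THEN conjunct1] by blast
lemma comm: "x \<in> cmp M k \<Longrightarrow> y \<in> cmp M k \<Longrightarrow> gadd M k x y = gadd M k y x"
  using ax[THEN conjunct2, THEN conjunct2, THEN conjunct2, THEN conjunct1] by blast
lemma zero_l[simp]: "x \<in> cmp M k \<Longrightarrow> gadd M k (gzero M k) x = x"
  using ax[THEN conjunct2, THEN conjunct2, THEN conjunct2, THEN conjunct2, THEN conjunct1] by blast
lemma inv_ex: "x \<in> cmp M k \<Longrightarrow> \<exists>y\<in>cmp M k. gadd M k x y = gzero M k"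
  using ax[THEN conjunct2, THEN conjunct2, THEN conjunct2, THEN conjunct2, THEN conjunct2, THEN conjunct1] by blast
lemma act_in: "r \<in> Rh V w i \<Longrightarrow> x \<in> cmp M k \<Longrightarrow> gact M i r k x \<in> cmp M (i + k)"
  using ax[THEN conjunct2, THEN conjunct2, THEN conjunct2, THEN conjunct2, THEN conjunct2, THEN conjunct2, THEN conjunct1] by blast
lemma act_radd: "r \<in> Rh V w i \<Longrightarrow> s \<in> Rh V w i \<Longrightarrow> x \<in> cmp M k \<Longrightarrow>
         gact M i (r + s) k x = gadd M (i + k) (gact M i r k x) (gact M i s k x)"
  using ax[THEN conjunct2, THEN conjunct2, THEN conjunct2, THEN conjunct2, THEN conjunct2, THEN conjunct2, THEN conjunct2, THEN conjunct1] by blast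
lemma act_vadd: "r \<in> Rh V w i \<Longrightarrow> x \<in> cmp M k \<Longrightarrow> y \<in> cmp M k \<Longrightarrow>
         gact M i r k (gadd M k x y) = gadd M (i + k) (gact M i r k x) (gact M i r k y)"
  using ax[THEN conjunct2, THEN conjunct2, THEN conjunct2, THEN conjunct2, THEN conjunct2, THEN conjunct2, THEN conjunct2, THEN conjunct2, THEN conjunct1] by blast
lemma act_mult: "r \<in> Rh V w i \<Longrightarrow> s \<in> Rh V w j \<Longrightarrow> x \<in> cmp M k \<Longrightarrow>
         gact M (i + j) (r * s) k x = gact M i r (j + k) (gact M j s k x)"
  using ax[THEN conjunct2, THEN conjunct2, THEN conjunct2, THEN conjunct2, THEN conjunct2, THEN conjunct2, THEN conjunct2, THEN conjunct2, THEN conjunct2, THEN conjunct1] by blast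
lemma act_one[simp]: "x \<in> cmp M k \<Longrightarrow> gact M 0 1 k x = x"
  using ax[THEN conjunct2, THEN conjunct2, THEN conjunct2, THEN conjunct2, THEN conjunct2, THEN conjunct2, THEN conjunct2, THEN conjunct2, THEN conjunct2, THEN conjunct2] by blast

lemma zero_r[simp]: "x \<in> cmp M k \<Longrightarrow> gadd M k x (gzero M k) = x"
  using comm[of x k "gzero M k"] by simp

lemma idem_zero: assumes g: "g \<in> cmp M k" and e: "gadd M k g g = g" shows "g = gzero M k"
proof -
  obtain y where y: "y \<in> cmp M k" "gadd M k g y = gzero M k" using inv_ex[OF g] by blast
  have "g = gadd M k g (gadd M k g y)" using y g by simp
  also have "\<dots> = gadd M k (gadd M k g g) y" using assoc[OF g g y(1)] by simp
  also have "\<dots> = gzero M k" using e y by simp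
  finally show ?thesis .
qed

lemma act_zero_r[simp]: assumes x: "x \<in> cmp M k" shows "gact M i 0 k x = gzero M (i + k)"
  using idem_zero[OF act_in[OF Rh_zero x]] act_radd[OF Rh_zero Rh_zero x] by simp

lemma act_zero_v[simp]: assumes r: "r \<in> Rh V w i" shows "gact M i r k (gzero M k) = gzero M (i + k)"
  using idem_zero[OF act_in[OF r zero_in]] act_vadd[OF r zero_in zero_in] by simp

lemma add_self[simp]: assumes x: "x \<in> cmp M k" shows "gadd M k x x = gzero M k"
proof -
  have "gact M 0 (1 + 1) k x = gadd M k x x"
    using act_radd[OF Rh_one Rh_one x] x by simp
  moreover have "gact M 0 (1 + 1) k x = gzero M k"
    using x by (simp add: one_plus_one_rpoly)
  ultimately show ?thesis by simp
qed

lemma add_cancel_self: "x \<in> cmp M k \<Longrightarrow> y \<in> cmp M k \<Longrightarrow> gadd M k x (gadd M k x y) = y"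
  using assoc[of x k x y, symmetric] by simp

lemma cancel_l: assumes "x \<in> cmp M k" "y \<in> cmp M k" "z \<in> cmp M k"
  and "gadd M k x y = gadd M k x z" shows "y = z"
proof -
  have "y = gadd M k x (gadd M k x y)" using add_cancel_self[of x k y] assms by simp
  also have "\<dots> = gadd M k x (gadd M k x z)" by (simp only: assms(4))
  also have "\<dots> = z" using add_cancel_self[of x k z] assms by simp
  finally show ?thesis .
qed

lemma sum_zero_eq: assumes "x \<in> cmp M k" "y \<in> cmp M k" "gadd M k x y = gzero M k" shows "x = y"
proof -
  have "x = gadd M k y (gadd M k y x)" using add_cancel_self[of y k x] assms by simp
  also have "gadd M k y x = gadd M k x y" using comm[of y k x] assms by simp
  finally show ?thesis using assms by simp
qed

lemma lcomm: "x \<in> cmp M k \<Longrightarrow> y \<in> cmp M k \<Longrightarrow> z \<in> cmp M k \<Longrightarrow>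
   gadd M k x (gadd M k y z) = gadd M k y (gadd M k x z)"
proof -
  assume a: "x \<in> cmp M k" "y \<in> cmp M k" "z \<in> cmp M k"
  have "gadd M k x (gadd M k y z) = gadd M k (gadd M k x y) z" using assoc[OF a] by simp
  also have "gadd M k x y = gadd M k y x" using comm a by blast
  also have "gadd M k (gadd M k y x) z = gadd M k y (gadd M k x z)" using assoc a by blast
  finally show ?thesis .
qed

lemma swap4: "a \<in> cmp M k \<Longrightarrow> b \<in> cmp M k \<Longrightarrow> c \<in> cmp M k \<Longrightarrow> d \<in> cmp M k \<Longrightarrow>
   gadd M k (gadd M k a b) (gadd M k c d) = gadd M k (gadd M k a c) (gadd M k b d)"
proof -
  assume h: "a \<in> cmp M k" "b \<in> cmp M k" "c \<in> cmp M k" "d \<in> cmp M k"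
  have "gadd M k (gadd M k a b) (gadd M k c d) = gadd M k a (gadd M k b (gadd M k c d))"
    using assoc h add_in by blast
  also have "gadd M k b (gadd M k c d) = gadd M k c (gadd M k b d)" using lcomm h by blast
  also have "gadd M k a (gadd M k c (gadd M k b d)) = gadd M k (gadd M k a c) (gadd M k b d)"
    using assoc[symmetric] h add_in by blast
  finally show ?thesis .
qed

definition ok :: "int \<Rightarrow> (int \<times> 'a \<times> rpoly) list \<Rightarrow> bool" where
  "ok k xs \<longleftrightarrow> (\<forall>(j, b, r)\<in>set xs. b \<in> cmp M j \<and> r \<in> Rh V w (k - j))"

lemma ok_Nil[simp]: "ok k []" by (simp add: ok_def)
lemma ok_Cons[simp]: "ok k ((j,b,r)#xs) \<longleftrightarrow> b \<in> cmp M j \<and> r \<in> Rh V w (k - j) \<and> ok k xs"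
  by (simp add: ok_def)
lemma ok_append[simp]: "ok k (xs @ ys) \<longleftrightarrow> ok k xs \<and> ok k ys"
  by (simp add: ok_def ball_Un)

lemma term_in: "b \<in> cmp M j \<Longrightarrow> r \<in> Rh V w (k - j) \<Longrightarrow> gact M (k - j) r j b \<in> cmp M k"
  using act_in[of r "k - j" b j] by simp

lemma lincomb_in: "ok k xs \<Longrightarrow> lincomb M k xs \<in> cmp M k"
  by (induction xs) (auto simp: term_in)

lemma lincomb_append: "ok k xs \<Longrightarrow> ok k ys \<Longrightarrow>
   lincomb M k (xs @ ys) = gadd M k (lincomb M k xs) (lincomb M k ys)"
proof (induction xs)
  case Nil thus ?case using lincomb_in by simp
next
  case (Cons x xs)
  obtain j b r where x: "x = (j,b,r)" by (cases x) auto
  have t: "gact M (k - j) r j b \<in> cmp M k" using Cons.prems x term_in by simp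
  have o: "ok k xs" using Cons.prems x by simp
  show ?case using Cons.IH[OF o Cons.prems(2)] x
      assoc[OF t lincomb_in[OF o] lincomb_in[OF Cons.prems(2)]] by simp
qed

lemma lincomb_middle: "ok k (ys1 @ (j,b,r) # ys2) \<Longrightarrow>
   lincomb M k (ys1 @ (j,b,r) # ys2) = gadd M k (gact M (k - j) r j b) (lincomb M k (ys1 @ ys2))"
proof (induction ys1)
  case Nil thus ?case by simp
next
  case (Cons y ys1)
  obtain j' b' r' where y: "y = (j',b',r')" by (cases y) auto
  have o: "ok k (ys1 @ (j, b, r) # ys2)" using Cons.prems y by simp
  hence o2: "ok k (ys1 @ ys2)" and t: "gact M (k - j) r j b \<in> cmp M k" using term_in by auto
  have t': "gact M (k - j') r' j' b' \<in> cmp M k" using Cons.prems y term_in by simp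
  show ?case using Cons.IH[OF o] y lcomm[OF t' t lincomb_in[OF o2]] by simp
qed

lemma ok_mset: "mset xs = mset ys \<Longrightarrow> ok k xs \<Longrightarrow> ok k ys"
proof -
  assume "mset xs = mset ys" "ok k xs"
  moreover have "set xs = set ys" using \<open>mset xs = mset ys\<close> by (rule mset_eq_setD)
  ultimately show "ok k ys" unfolding ok_def by simp
qed

lemma lincomb_perm: "mset xs = mset ys \<Longrightarrow> ok k xs \<Longrightarrow> lincomb M k xs = lincomb M k ys"
proof (induction xs arbitrary: ys)
  case Nil thus ?case by simp
next
  case (Cons x xs)
  obtain j b r where x: "x = (j,b,r)" by (cases x) auto
  have xin: "x \<in> set ys" using mset_eq_setD[OF Cons.prems(1)] by (metis list.set_intros(1))
  obtain ys1 ys2 where ys: "ys = ys1 @ x # ys2" using split_list[OF xin] by auto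
  have m: "mset xs = mset (ys1 @ ys2)" using Cons.prems(1) unfolding ys by (simp add: union_assoc[symmetric])
  have okys: "ok k ys" using ok_mset[OF Cons.prems(1) Cons.prems(2)] .
  have o: "ok k xs" using Cons.prems(2) x by simp
  have e1: "lincomb M k ys = gadd M k (gact M (k - j) r j b) (lincomb M k (ys1 @ ys2))"
    using lincomb_middle[of k ys1 j b r ys2] okys unfolding ys x by blast
  have e2: "lincomb M k (ys1 @ ys2) = lincomb M k xs"
    using Cons.IH[OF m o] by (rule sym)
  show ?case using e1 e2 x by simp
qed

lemma lincomb_act: "r \<in> Rh V w i \<Longrightarrow> ok k xs \<Longrightarrow>
   gact M i r k (lincomb M k xs) = lincomb M (i + k) (map (\<lambda>(j,b,s). (j,b,r*s)) xs)"
proof (induction xs)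
  case Nil thus ?case by simp
next
  case (Cons x xs)
  obtain j b s where x: "x = (j,b,s)" by (cases x) auto
  have b: "b \<in> cmp M j" "s \<in> Rh V w (k - j)" and o: "ok k xs" using Cons.prems x by auto
  have t: "gact M (k - j) s j b \<in> cmp M k" using term_in b by blast
  have "gact M i r k (gact M (k - j) s j b) = gact M (i + (k - j)) (r * s) j b"
    using act_mult[of r i s "k - j" b j] Cons.prems b by simp
  moreover have "i + (k - j) = i + k - j" by simp
  ultimately have e: "gact M i r k (gact M (k - j) s j b) = gact M (i + k - j) (r * s) j b" by simp
  have "gact M i r k (lincomb M k (x # xs)) = gadd M (i + k) (gact M i r k (gact M (k - j) s j b)) (gact M i r k (lincomb M k xs))"
    using act_vadd[OF Cons.prems(1) t lincomb_in[OF o]] x by simp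
  also have "\<dots> = lincomb M (i + k) (map (\<lambda>(j,b,s). (j,b,r*s)) (x # xs))"
    using e Cons.IH[OF Cons.prems(1) o] x by simp
  finally show ?case .
qed

lemma lincomb_pw_add:
  assumes "\<forall>(j,b,r)\<in>set xs. u j b \<in> cmp M j \<and> v j b \<in> cmp M j \<and> r \<in> Rh V w (k - j)"
  shows "gadd M k (lincomb M k (map (\<lambda>(j,b,r). (j, u j b, r)) xs)) (lincomb M k (map (\<lambda>(j,b,r). (j, v j b, r)) xs))
       = lincomb M k (map (\<lambda>(j,b,r). (j, gadd M j (u j b) (v j b), r)) xs)"
  using assms
proof (induction xs)
  case Nil thus ?case by simp
next
  case (Cons x xs)
  obtain j b r where x: "x = (j,b,r)" by (cases x) auto
  have h: "u j b \<in> cmp M j" "v j b \<in> cmp M j" "r \<in> Rh V w (k - j)" using Cons.prems x by auto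
  have h2: "\<forall>(j,b,r)\<in>set xs. u j b \<in> cmp M j \<and> v j b \<in> cmp M j \<and> r \<in> Rh V w (k - j)"
    using Cons.prems by simp
  have ok1: "ok k (map (\<lambda>(j,b,r). (j, u j b, r)) xs)" and ok2: "ok k (map (\<lambda>(j,b,r). (j, v j b, r)) xs)"
    using h2 by (auto simp: ok_def)
  have e: "gact M (k - j) r j (gadd M j (u j b) (v j b)) = gadd M k (gact M (k - j) r j (u j b)) (gact M (k - j) r j (v j b))"
    using act_vadd[of r "k - j" "u j b" j "v j b"] h by simp
  have s4: "gadd M k (gadd M k (gact M (k - j) r j (u j b)) (lincomb M k (map (\<lambda>(j,b,r). (j, u j b, r)) xs)))
        (gadd M k (gact M (k - j) r j (v j b)) (lincomb M k (map (\<lambda>(j,b,r). (j, v j b, r)) xs)))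
     = gadd M k (gadd M k (gact M (k - j) r j (u j b)) (gact M (k - j) r j (v j b)))
        (gadd M k (lincomb M k (map (\<lambda>(j,b,r). (j, u j b, r)) xs)) (lincomb M k (map (\<lambda>(j,b,r). (j, v j b, r)) xs)))"
    using swap4[OF term_in[OF h(1,3)] lincomb_in[OF ok1] term_in[OF h(2,3)] lincomb_in[OF ok2]] .
  show ?case using s4 e Cons.IH[OF h2] x by simp
qed

lemma lincomb_zero_coeff: "\<forall>(j,b,r)\<in>set xs. b \<in> cmp M j \<and> r = 0 \<Longrightarrow> lincomb M k xs = gzero M k"
  by (induction xs) auto

lemma lincomb_zero_vec: "\<forall>(j,b,r)\<in>set xs. b = gzero M j \<and> r \<in> Rh V w (k - j) \<Longrightarrow> lincomb M k xs = gzero M k"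
  by (induction xs) auto

lemma lincomb_single[simp]: "b \<in> cmp M j \<Longrightarrow> lincomb M j [(j, b, 1)] = b"
  by simp

end

lemma lincomb_cmp_upd: "lincomb (M\<lparr>cmp := c\<rparr>) k xs = lincomb M k xs"
  by (induction xs) auto




lemma not_distinct_pair: "\<not> distinct (map f zs) \<Longrightarrow> \<exists>p1 p2. f p1 = f p2 \<and> {#p1, p2#} \<subseteq># mset zs"
proof (induction zs)
  case Nil thus ?case by simp
next
  case (Cons z zs)
  show ?case
  proof (cases "f z \<in> f ` set zs")
    case True
    then obtain p where p: "p \<in> set zs" "f p = f z" by auto
    have "{#p#} \<subseteq># mset zs" using p(1) by simp
    hence "{#z, p#} \<subseteq># mset (z # zs)" by simp
    thus ?thesis using p by (intro exI[of _ z] exI[of _ p]) simp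
  next
    case False
    hence "\<not> distinct (map f zs)" using Cons.prems by simp
    then obtain p1 p2 where pp: "f p1 = f p2" "{#p1, p2#} \<subseteq># mset zs" using Cons.IH by blast
    have "mset zs \<subseteq># mset (z # zs)" by simp
    hence "{#p1, p2#} \<subseteq># mset (z # zs)" using pp(2) by (rule subset_mset.order_trans[rotated])
    thus ?thesis using pp(1) by blast
  qed
qed

lemma mset_pair_decomp: "{#p1, p2#} \<subseteq># mset zs \<Longrightarrow>
   mset zs = mset (p1 # p2 # remove1 p2 (remove1 p1 zs))"
proof -
  assume a: "{#p1, p2#} \<subseteq># mset zs"
  hence p1: "p1 \<in> set zs" by (simp add: insert_subset_eq_iff)
  have "{#p2#} \<subseteq># mset zs - {#p1#}" using a by (simp add: insert_subset_eq_iff)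
  hence "p2 \<in># mset (remove1 p1 zs)" by simp
  hence p2: "p2 \<in> set (remove1 p1 zs)" by (simp only: set_mset_mset)
  have q1: "p1 \<in># mset zs" using p1 by simp
  have q2: "p2 \<in># mset zs - {#p1#}" using p2 by (simp only: mset_remove1[symmetric] set_mset_mset)
  show ?thesis
    by (simp only: mset.simps mset_remove1 insert_DiffM[OF q2] insert_DiffM[OF q1])
qed



locale gm2 = M: gm V w M + N: gm V w N
  for V :: "nat set" and w :: "nat \<Rightarrow> int" and M :: "'a gmod" and N :: "'b gmod"
begin

lemma free_ext:
  fixes bas :: "int \<Rightarrow> 'a set" and e :: int and g :: "int \<Rightarrow> 'a \<Rightarrow> 'b"
  assumes bas_sub: "\<forall>j. bas j \<subseteq> cmp M j"
    and span: "\<forall>k x. x \<in> cmp M k \<longrightarrow>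
        (\<exists>xs. (\<forall>(j, b, r)\<in>set xs. b \<in> bas j \<and> r \<in> Rh V w (k - j)) \<and> x = lincomb M k xs)"
    and indep: "\<forall>k xs. (\<forall>(j, b, r)\<in>set xs. b \<in> bas j \<and> r \<in> Rh V w (k - j)) \<and>
        distinct (map (\<lambda>(j, b, r). (j, b)) xs) \<and> lincomb M k xs = gzero M k \<longrightarrow>
        (\<forall>(j, b, r)\<in>set xs. r = 0)"
    and g: "\<And>j b. b \<in> bas j \<Longrightarrow> g j b \<in> cmp N (j + e)"
  shows "\<exists>F. ghom V w M N e F \<and> (\<forall>j b. b \<in> bas j \<longrightarrow> F j b = g j b)"
proof -
  define vb where "vb k xs \<longleftrightarrow> (\<forall>(j, b, r)\<in>set xs. b \<in> bas j \<and> r \<in> Rh V w (k - j))" for k xs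
  define gl where "gl xs = map (\<lambda>(j, b, r). (j + e, g j b, r)) xs" for xs :: "(int \<times> 'a \<times> rpoly) list"
  have vb_okM: "M.ok k xs" if "vb k xs" for k xs
    using that bas_sub unfolding vb_def M.ok_def by (fastforce simp: subset_iff)
  have vb_okN: "N.ok (k + e) (gl xs)" if "vb k xs" for k xs
  proof -
    have "\<forall>(j, b, r)\<in>set xs. g j b \<in> cmp N (j + e) \<and> r \<in> Rh V w (k + e - (j + e))"
      using that g unfolding vb_def by fastforce
    thus ?thesis unfolding N.ok_def gl_def by (simp add: split_def)
  qed
  have vb_mset: "vb k ys" if "vb k xs" "mset xs = mset ys" for k xs ys
    using that mset_eq_setD[of xs ys] unfolding vb_def by simp
  have merge: "lincomb M k ((j,b,r1) # (j,b,r2) # rest) = lincomb M k ((j,b,r1+r2) # rest) \<and>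
     lincomb N (k + e) (gl ((j,b,r1) # (j,b,r2) # rest)) = lincomb N (k + e) (gl ((j,b,r1+r2) # rest))"
    if "vb k ((j,b,r1) # (j,b,r2) # rest)" for k j b r1 r2 rest
  proof -
    have b: "b \<in> cmp M j" "g j b \<in> cmp N (j + e)" "r1 \<in> Rh V w (k - j)" "r2 \<in> Rh V w (k - j)"
      "vb k rest"
      using that bas_sub g unfolding vb_def by auto
    have oM: "M.ok k rest" and oN: "N.ok (k + e) (gl rest)" using b vb_okM vb_okN by auto
    have t1: "gact M (k - j) r1 j b \<in> cmp M k" "gact M (k - j) r2 j b \<in> cmp M k"
      using M.term_in b by auto
    have "lincomb M k ((j,b,r1) # (j,b,r2) # rest) = lincomb M k ((j,b,r1+r2) # rest)"
      using b M.act_radd[of r1 "k - j" r2 b j] M.assoc[OF t1 M.lincomb_in[OF oM]]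
      by simp
    moreover
    have ee: "k - j + (j + e) = k + e" by simp
    have t2: "gact N (k - j) r1 (j + e) (g j b) \<in> cmp N (k + e)" "gact N (k - j) r2 (j + e) (g j b) \<in> cmp N (k + e)"
      using N.act_in[OF b(3) b(2)] N.act_in[OF b(4) b(2)] ee by auto
    have "lincomb N (k + e) (gl ((j,b,r1) # (j,b,r2) # rest)) = lincomb N (k + e) (gl ((j,b,r1+r2) # rest))"
      using b N.act_radd[of r1 "k - j" r2 "g j b" "j + e"] ee N.assoc[OF t2 N.lincomb_in[OF oN]]
      by (simp add: gl_def)
    ultimately show ?thesis by blast
  qed
  have gl_mset: "mset (gl xs) = mset (gl ys)" if "mset xs = mset ys" for xs ys
    using that unfolding gl_def by simp
  have WD0: "lincomb N (k + e) (gl zs) = gzero N (k + e)"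
    if "vb k zs" "lincomb M k zs = gzero M k" for k zs
    using that
  proof (induction "length zs" arbitrary: zs rule: less_induct)
    case less
    show ?case
    proof (cases "distinct (map (\<lambda>(j, b, r). (j, b)) zs)")
      case True
      hence "\<forall>(j, b, r)\<in>set zs. r = 0" using indep less.prems unfolding vb_def by blast
      hence "\<forall>(j, b, r)\<in>set zs. g j b \<in> cmp N (j + e) \<and> r = 0"
        using less.prems g unfolding vb_def by fastforce
      hence "\<forall>(j, b, r)\<in>set (gl zs). b \<in> cmp N j \<and> r = 0"
        unfolding gl_def by (simp add: split_def)
      thus ?thesis by (rule N.lincomb_zero_coeff)
    next
      case False
      then obtain p1 p2 where pp: "(\<lambda>(j, b, r). (j, b)) p1 = (\<lambda>(j, b, r). (j, b)) p2" "{#p1, p2#} \<subseteq># mset zs"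
        using not_distinct_pair by blast
      obtain j b r1 r2 where p1: "p1 = (j,b,r1)" and p2: "p2 = (j,b,r2)" using pp(1)
        by (cases p1, cases p2) auto
      define rest where "rest = remove1 p2 (remove1 p1 zs)"
      have ms: "mset zs = mset ((j,b,r1) # (j,b,r2) # rest)"
        using mset_pair_decomp[OF pp(2)] p1 p2 rest_def by simp
      have v1: "vb k ((j,b,r1) # (j,b,r2) # rest)" using vb_mset[OF less.prems(1) ms] .
      hence v2: "vb k ((j,b,r1+r2) # rest)" unfolding vb_def by (auto intro: Rh_add)
      have eM: "lincomb M k zs = lincomb M k ((j,b,r1+r2) # rest)"
        using M.lincomb_perm[OF ms vb_okM[OF less.prems(1)]] merge[OF v1] by simp
      have eN: "lincomb N (k + e) (gl zs) = lincomb N (k + e) (gl ((j,b,r1+r2) # rest))"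
        using N.lincomb_perm[OF gl_mset[OF ms] vb_okN[OF less.prems(1)]] merge[OF v1] by simp
      have "length zs = Suc (Suc (length rest))" using mset_eq_length[OF ms] by simp
      hence len: "length ((j,b,r1+r2) # rest) < length zs" by simp
      show ?thesis using less.hyps[OF len v2] less.prems(2) eM eN by simp
    qed
  qed
  have WD: "lincomb N (k + e) (gl xs) = lincomb N (k + e) (gl ys)"
    if "vb k xs" "vb k ys" "lincomb M k xs = lincomb M k ys" for k xs ys
  proof -
    have "vb k (xs @ ys)" using that unfolding vb_def by auto
    moreover have "lincomb M k (xs @ ys) = gzero M k"
    proof -
      have "lincomb M k (xs @ ys) = gadd M k (lincomb M k xs) (lincomb M k ys)"
        by (rule M.lincomb_append[OF vb_okM[OF that(1)] vb_okM[OF that(2)]])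
      also have "\<dots> = gadd M k (lincomb M k xs) (lincomb M k xs)" using that(3) by simp
      also have "\<dots> = gzero M k" by (rule M.add_self[OF M.lincomb_in[OF vb_okM[OF that(1)]]])
      finally show ?thesis .
    qed
    ultimately have z: "lincomb N (k + e) (gl (xs @ ys)) = gzero N (k + e)" by (rule WD0)
    have "gl (xs @ ys) = gl xs @ gl ys" by (simp add: gl_def)
    hence "gadd N (k + e) (lincomb N (k + e) (gl xs)) (lincomb N (k + e) (gl ys)) = gzero N (k + e)"
      using z N.lincomb_append[OF vb_okN[OF that(1)] vb_okN[OF that(2)]] by simp
    thus ?thesis by (rule N.sum_zero_eq[OF N.lincomb_in[OF vb_okN[OF that(1)]] N.lincomb_in[OF vb_okN[OF that(2)]]])
  qed
  define rep where "rep k x = (SOME xs. vb k xs \<and> x = lincomb M k xs)" for k x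
  have rep: "vb k (rep k x) \<and> x = lincomb M k (rep k x)" if "x \<in> cmp M k" for k x
  proof -
    have "\<exists>xs. vb k xs \<and> x = lincomb M k xs" using span that unfolding vb_def by blast
    thus ?thesis unfolding rep_def by (rule someI_ex)
  qed
  define F where "F k x = lincomb N (k + e) (gl (rep k x))" for k x
  have Feq: "F k x = lincomb N (k + e) (gl xs)" if "vb k xs" "x = lincomb M k xs" for k x xs
  proof -
    have "x \<in> cmp M k" using that M.lincomb_in vb_okM by blast
    hence r: "vb k (rep k x)" "x = lincomb M k (rep k x)" using rep by auto
    have "lincomb M k (rep k x) = lincomb M k xs" using r(2) that(2) by simp
    thus ?thesis unfolding F_def by (rule WD[OF r(1) that(1)])
  qed
  have "ghom V w M N e F"
    unfolding ghom_def
  proof (intro conjI allI impI)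
    fix k x assume x: "x \<in> cmp M k"
    show "F k x \<in> cmp N (k + e)" unfolding F_def using rep[OF x] vb_okN N.lincomb_in by blast
  next
    fix k x y assume xy: "x \<in> cmp M k \<and> y \<in> cmp M k"
    have rx: "vb k (rep k x)" "x = lincomb M k (rep k x)" and ry: "vb k (rep k y)" "y = lincomb M k (rep k y)"
      using rep xy by auto
    have r: "vb k (rep k x @ rep k y)" using rx ry unfolding vb_def by auto
    have "gadd M k x y = lincomb M k (rep k x @ rep k y)"
      using M.lincomb_append[OF vb_okM[OF rx(1)] vb_okM[OF ry(1)]] rx(2) ry(2) by simp
    hence "F k (gadd M k x y) = lincomb N (k + e) (gl (rep k x @ rep k y))" using Feq r by blast
    also have "gl (rep k x @ rep k y) = gl (rep k x) @ gl (rep k y)" by (simp add: gl_def)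
    also have "lincomb N (k + e) (gl (rep k x) @ gl (rep k y)) = gadd N (k + e) (F k x) (F k y)"
      unfolding F_def by (rule N.lincomb_append[OF vb_okN[OF rx(1)] vb_okN[OF ry(1)]])
    finally show "F k (gadd M k x y) = gadd N (k + e) (F k x) (F k y)" .
  next
    fix i r k x assume a: "r \<in> Rh V w i \<and> x \<in> cmp M k"
    define xs where "xs = rep k x"
    have xs: "vb k xs" "x = lincomb M k xs" using rep a xs_def by auto
    define ys where "ys = map (\<lambda>(j,b,s). (j,b,r*s)) xs"
    have "\<forall>(j,b,s)\<in>set xs. b \<in> bas j \<and> r * s \<in> Rh V w (i + (k - j))"
      using xs(1) a unfolding vb_def by (auto intro: Rh_mult)
    hence vys: "vb (i + k) ys" unfolding vb_def ys_def by (simp add: split_def add_diff_eq)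
    have "gact M i r k x = lincomb M (i + k) ys"
      unfolding ys_def using M.lincomb_act a xs vb_okM by blast
    hence "F (i + k) (gact M i r k x) = lincomb N (i + k + e) (gl ys)" using Feq vys by blast
    also have "gl ys = map (\<lambda>(j,b,s). (j,b,r*s)) (gl xs)" unfolding gl_def ys_def by auto
    also have "lincomb N (i + k + e) (map (\<lambda>(j,b,s). (j,b,r*s)) (gl xs)) = gact N i r (k + e) (F k x)"
    proof -
      have "gact N i r (k + e) (lincomb N (k + e) (gl xs)) = lincomb N (i + (k + e)) (map (\<lambda>(j,b,s). (j,b,r*s)) (gl xs))"
        using N.lincomb_act[of r i "k + e" "gl xs"] a vb_okN[OF xs(1)] by blast
      thus ?thesis using Feq[OF xs] by (simp add: add.assoc)
    qed
    finally show "F (i + k) (gact M i r k x) = gact N i r (k + e) (F k x)" .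
  qed
  moreover have "F j b = g j b" if "b \<in> bas j" for j b
  proof -
    have "vb j [(j, b, 1)]" using that unfolding vb_def by simp
    moreover have "b \<in> cmp M j" using that bas_sub by blast
    hence "b = lincomb M j [(j, b, 1)]" by simp
    ultimately have "F j b = lincomb N (j + e) (gl [(j, b, 1)])" using Feq by blast
    thus ?thesis using g[OF that] by (simp add: gl_def)
  qed
  ultimately show ?thesis by blast
qed

end



context gm2 begin

lemma ghom_zero: assumes h: "ghom V w M N e F" shows "F k (gzero M k) = gzero N (k + e)"
proof -
  have i: "F k (gzero M k) \<in> cmp N (k + e)" using h unfolding ghom_def by simp
  have "F k (gadd M k (gzero M k) (gzero M k)) = gadd N (k + e) (F k (gzero M k)) (F k (gzero M k))"
    using h M.zero_in unfolding ghom_def by blast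
  hence "gadd N (k + e) (F k (gzero M k)) (F k (gzero M k)) = F k (gzero M k)" by simp
  thus ?thesis by (rule N.idem_zero[OF i])
qed

lemma ghom_lincomb: assumes h: "ghom V w M N e F" and o: "M.ok k xs"
  shows "F k (lincomb M k xs) = lincomb N (k + e) (map (\<lambda>(j,b,r). (j + e, F j b, r)) xs)"
  using o
proof (induction xs)
  case Nil thus ?case using ghom_zero[OF h] by simp
next
  case (Cons x xs)
  obtain j b r where x: "x = (j,b,r)" by (cases x) auto
  have b: "b \<in> cmp M j" "r \<in> Rh V w (k - j)" and o: "M.ok k xs" using Cons.prems x by auto
  have t: "gact M (k - j) r j b \<in> cmp M k" using M.term_in b by blast
  have e1: "F k (gadd M k (gact M (k - j) r j b) (lincomb M k xs)) =
     gadd N (k + e) (F k (gact M (k - j) r j b)) (F k (lincomb M k xs))"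
    using h t M.lincomb_in[OF o] unfolding ghom_def by blast
  have "F (k - j + j) (gact M (k - j) r j b) = gact N (k - j) r (j + e) (F j b)"
    using h b unfolding ghom_def by blast
  hence e2: "F k (gact M (k - j) r j b) = gact N (k + e - (j + e)) r (j + e) (F j b)" by simp
  show ?case using e1 e2 Cons.IH[OF o] x by simp
qed

end

locale dgm = gm V w M for V w and M :: "'a gmod" + fixes d :: "int \<Rightarrow> 'a \<Rightarrow> 'a"
  assumes dg: "dgmodule V w M d"
begin

lemma d_ghom: "ghom V w M M (-1) d" using dg unfolding dgmodule_def by blast

lemma d_in[simp]: "x \<in> cmp M k \<Longrightarrow> d k x \<in> cmp M (k - 1)"
  using d_ghom unfolding ghom_def by simp

lemma d_add: "x \<in> cmp M k \<Longrightarrow> y \<in> cmp M k \<Longrightarrow> d k (gadd M k x y) = gadd M (k - 1) (d k x) (d k y)"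
  using d_ghom unfolding ghom_def by simp

lemma d_act: "r \<in> Rh V w i \<Longrightarrow> x \<in> cmp M k \<Longrightarrow> d (i + k) (gact M i r k x) = gact M i r (k - 1) (d k x)"
  using d_ghom unfolding ghom_def by simp

lemma dd: "x \<in> cmp M k \<Longrightarrow> d (k - 1) (d k x) = gzero M (k - 2)"
  using dg unfolding dgmodule_def by blast

lemma d_zero[simp]: "d k (gzero M k) = gzero M (k - 1)"
proof -
  have "gm2 V w M M" by unfold_locales
  from gm2.ghom_zero[OF this d_ghom] show ?thesis by simp
qed

abbreviation "Z \<equiv> zcyc M d"
abbreviation "Bd \<equiv> bdry M d"
abbreviation "H \<equiv> homology M d"

lemma Z_iff: "z \<in> Z k \<longleftrightarrow> z \<in> cmp M k \<and> d k z = gzero M (k - 1)"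
  by (simp add: zcyc_def)

lemma Bd_iff: "b \<in> Bd k \<longleftrightarrow> (\<exists>c\<in>cmp M (k + 1). b = d (k + 1) c)"
  by (auto simp: bdry_def)

lemma Bd_Z: "b \<in> Bd k \<Longrightarrow> b \<in> Z k"
proof -
  assume "b \<in> Bd k"
  then obtain c where c: "c \<in> cmp M (k + 1)" "b = d (k + 1) c" by (auto simp: Bd_iff)
  have "d (k + 1 - 1) (d (k + 1) c) = gzero M (k + 1 - 2)" by (rule dd[OF c(1)])
  moreover have "d (k + 1) c \<in> cmp M (k + 1 - 1)" using d_in[OF c(1)] by simp
  ultimately show ?thesis using c by (simp add: Z_iff)
qed

lemma Bd_cmp: "b \<in> Bd k \<Longrightarrow> b \<in> cmp M k"
  using Bd_Z Z_iff by blast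

lemma Bd_zero[simp]: "gzero M k \<in> Bd k"
proof -
  have "d (k + 1) (gzero M (k + 1)) = gzero M k" by simp
  thus ?thesis unfolding Bd_iff using zero_in by metis
qed

lemma Bd_add: "b1 \<in> Bd k \<Longrightarrow> b2 \<in> Bd k \<Longrightarrow> gadd M k b1 b2 \<in> Bd k"
proof -
  assume "b1 \<in> Bd k" "b2 \<in> Bd k"
  then obtain c1 c2 where c: "c1 \<in> cmp M (k + 1)" "b1 = d (k + 1) c1" "c2 \<in> cmp M (k + 1)" "b2 = d (k + 1) c2"
    by (auto simp: Bd_iff)
  have "d (k + 1) (gadd M (k + 1) c1 c2) = gadd M k b1 b2" using d_add[OF c(1) c(3)] c by simp
  thus ?thesis unfolding Bd_iff using add_in[OF c(1) c(3)] by metis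
qed

lemma Bd_act: "r \<in> Rh V w i \<Longrightarrow> b \<in> Bd k \<Longrightarrow> gact M i r k b \<in> Bd (i + k)"
proof -
  assume r: "r \<in> Rh V w i" and "b \<in> Bd k"
  then obtain c where c: "c \<in> cmp M (k + 1)" "b = d (k + 1) c" by (auto simp: Bd_iff)
  have "d (i + (k + 1)) (gact M i r (k + 1) c) = gact M i r k b" using d_act[OF r c(1)] c by simp
  moreover have "gact M i r (k + 1) c \<in> cmp M (i + k + 1)" using act_in[OF r c(1)] by (simp add: add.assoc)
  ultimately show ?thesis unfolding Bd_iff by (metis add.assoc)
qed

lemma Z_zero[simp]: "gzero M k \<in> Z k" by (simp add: Z_iff)

lemma Z_add: "z1 \<in> Z k \<Longrightarrow> z2 \<in> Z k \<Longrightarrow> gadd M k z1 z2 \<in> Z k"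
  by (simp add: Z_iff d_add)

lemma Z_act: "r \<in> Rh V w i \<Longrightarrow> z \<in> Z k \<Longrightarrow> gact M i r k z \<in> Z (i + k)"
proof -
  assume r: "r \<in> Rh V w i" and z: "z \<in> Z k"
  have "d (i + k) (gact M i r k z) = gzero M (i + (k - 1))" using d_act[OF r] z r by (simp add: Z_iff)
  moreover have "gact M i r k z \<in> cmp M (i + k)" using act_in[OF r] z by (simp add: Z_iff)
  moreover have "i + (k - 1) = i + k - 1" by simp
  ultimately show ?thesis by (simp add: Z_iff)
qed

lemma mem_hcls: "x \<in> hcls M d k z \<longleftrightarrow> (\<exists>b\<in>Bd k. x = gadd M k z b)"
  by (auto simp: hcls_def)

lemma hcls_self: "z \<in> cmp M k \<Longrightarrow> z \<in> hcls M d k z"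
  unfolding mem_hcls by (metis Bd_zero zero_r)

lemma hcls_add_bd: assumes z: "z \<in> cmp M k" and b: "b \<in> Bd k"
  shows "hcls M d k (gadd M k z b) = hcls M d k z"
proof (intro set_eqI iffI)
  fix x assume "x \<in> hcls M d k (gadd M k z b)"
  then obtain b' where b': "b' \<in> Bd k" "x = gadd M k (gadd M k z b) b'" by (auto simp: mem_hcls)
  hence "x = gadd M k z (gadd M k b b')" using assoc z Bd_cmp b by simp
  thus "x \<in> hcls M d k z" using Bd_add[OF b b'(1)] by (auto simp: mem_hcls)
next
  fix x assume "x \<in> hcls M d k z"
  then obtain b' where b': "b' \<in> Bd k" "x = gadd M k z b'" by (auto simp: mem_hcls)
  have bc: "b \<in> cmp M k" "b' \<in> cmp M k" using b b' Bd_cmp by auto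
  have "gadd M k (gadd M k z b) (gadd M k b b') = gadd M k z (gadd M k b (gadd M k b b'))"
    using assoc z bc by simp
  also have "gadd M k b (gadd M k b b') = b'" using add_cancel_self bc by blast
  finally have "x = gadd M k (gadd M k z b) (gadd M k b b')" using b' by simp
  thus "x \<in> hcls M d k (gadd M k z b)" using Bd_add[OF b b'(1)] by (auto simp: mem_hcls)
qed

lemma hcls_eq_iff: assumes "z1 \<in> cmp M k" "z2 \<in> cmp M k"
  shows "hcls M d k z1 = hcls M d k z2 \<longleftrightarrow> gadd M k z1 z2 \<in> Bd k"
proof
  assume "hcls M d k z1 = hcls M d k z2"
  hence "z1 \<in> hcls M d k z2" using hcls_self assms by blast
  then obtain b where b: "b \<in> Bd k" "z1 = gadd M k z2 b" by (auto simp: mem_hcls)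
  have "gadd M k z1 z2 = gadd M k z2 (gadd M k z2 b)" using b assms comm Bd_cmp by simp
  also have "\<dots> = b" using add_cancel_self assms Bd_cmp b by blast
  finally show "gadd M k z1 z2 \<in> Bd k" using b by simp
next
  assume b: "gadd M k z1 z2 \<in> Bd k"
  have "gadd M k z2 (gadd M k z1 z2) = z1"
    using add_cancel_self[of z2 k z1] comm[of z1 k z2] assms by simp
  hence "hcls M d k z1 = hcls M d k (gadd M k z2 (gadd M k z1 z2))" by simp
  also have "\<dots> = hcls M d k z2" by (rule hcls_add_bd[OF assms(2) b])
  finally show "hcls M d k z1 = hcls M d k z2" .
qed

lemma some_hcls: assumes z: "z \<in> cmp M k"
  shows "\<exists>b\<in>Bd k. (SOME x. x \<in> hcls M d k z) = gadd M k z b"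
proof -
  have "(SOME x. x \<in> hcls M d k z) \<in> hcls M d k z" using hcls_self[OF z] by (rule someI)
  thus ?thesis by (simp add: mem_hcls)
qed

lemma H_cmp: "cmp H k = hcls M d k ` Z k" by (simp add: homology_def)

lemma hcls_add: assumes z: "z1 \<in> cmp M k" "z2 \<in> cmp M k"
  shows "gadd H k (hcls M d k z1) (hcls M d k z2) = hcls M d k (gadd M k z1 z2)"
proof -
  obtain b1 where b1: "b1 \<in> Bd k" "(SOME x. x \<in> hcls M d k z1) = gadd M k z1 b1" using some_hcls z by blast
  obtain b2 where b2: "b2 \<in> Bd k" "(SOME x. x \<in> hcls M d k z2) = gadd M k z2 b2" using some_hcls z by blast
  have bc: "b1 \<in> cmp M k" "b2 \<in> cmp M k" using b1 b2 Bd_cmp by auto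
  have "gadd H k (hcls M d k z1) (hcls M d k z2) = hcls M d k (gadd M k (gadd M k z1 b1) (gadd M k z2 b2))"
    using b1 b2 by (simp add: homology_def)
  also have "gadd M k (gadd M k z1 b1) (gadd M k z2 b2) = gadd M k (gadd M k z1 z2) (gadd M k b1 b2)"
    using swap4 z bc by blast
  also have "hcls M d k \<dots> = hcls M d k (gadd M k z1 z2)"
    using hcls_add_bd Bd_add[OF b1(1) b2(1)] z by simp
  finally show ?thesis .
qed

lemma hcls_act: assumes r: "r \<in> Rh V w i" and z: "z \<in> cmp M k"
  shows "gact H i r k (hcls M d k z) = hcls M d (i + k) (gact M i r k z)"
proof -
  obtain b where b: "b \<in> Bd k" "(SOME x. x \<in> hcls M d k z) = gadd M k z b" using some_hcls z by blast
  have "gact H i r k (hcls M d k z) = hcls M d (i + k) (gact M i r k (gadd M k z b))"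
    using b by (simp add: homology_def)
  also have "gact M i r k (gadd M k z b) = gadd M (i + k) (gact M i r k z) (gact M i r k b)"
    using act_vadd r z Bd_cmp b by blast
  also have "hcls M d (i + k) \<dots> = hcls M d (i + k) (gact M i r k z)"
    using hcls_add_bd act_in r z Bd_act b by blast
  finally show ?thesis .
qed

lemma hcls_zero: "gzero H k = hcls M d k (gzero M k)" by (simp add: homology_def)

lemma H_elem: assumes "X \<in> cmp H k" shows "(SOME x. x \<in> X) \<in> Z k \<and> hcls M d k (SOME x. x \<in> X) = X"
proof -
  obtain z where z: "z \<in> Z k" "X = hcls M d k z" using assms H_cmp by auto
  obtain b where b: "b \<in> Bd k" "(SOME x. x \<in> X) = gadd M k z b" using some_hcls z Z_iff by blast
  have "gadd M k z b \<in> Z k" using Z_add z Bd_Z b by blast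
  moreover have "hcls M d k (gadd M k z b) = X" using hcls_add_bd z b Z_iff by simp
  ultimately show ?thesis using b by simp
qed

lemma H_gmodule: "gmodule V w H"
  unfolding gmodule_def
proof (intro conjI allI impI ballI)
  fix k show "gzero H k \<in> cmp H k" by (simp add: H_cmp hcls_zero)
next
  fix k X Y assume "X \<in> cmp H k" "Y \<in> cmp H k"
  then obtain x y where "x \<in> Z k" "y \<in> Z k" "X = hcls M d k x" "Y = hcls M d k y" by (auto simp: H_cmp)
  thus "gadd H k X Y \<in> cmp H k" using hcls_add Z_add Z_iff H_cmp by simp
next
  fix k X Y U assume "X \<in> cmp H k" "Y \<in> cmp H k" "U \<in> cmp H k"
  then obtain x y u where h: "x \<in> Z k" "y \<in> Z k" "u \<in> Z k" "X = hcls M d k x" "Y = hcls M d k y" "U = hcls M d k u"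
    by (auto simp: H_cmp)
  hence c: "x \<in> cmp M k" "y \<in> cmp M k" "u \<in> cmp M k" by (auto simp: Z_iff)
  show "gadd H k (gadd H k X Y) U = gadd H k X (gadd H k Y U)"
    using h c hcls_add assoc by simp
next
  fix k X Y assume "X \<in> cmp H k" "Y \<in> cmp H k"
  then obtain x y where h: "x \<in> Z k" "y \<in> Z k" "X = hcls M d k x" "Y = hcls M d k y" by (auto simp: H_cmp)
  hence c: "x \<in> cmp M k" "y \<in> cmp M k" by (auto simp: Z_iff)
  show "gadd H k X Y = gadd H k Y X" using h c hcls_add comm by metis
next
  fix k X assume "X \<in> cmp H k"
  then obtain x where h: "x \<in> Z k" "X = hcls M d k x" by (auto simp: H_cmp)
  hence c: "x \<in> cmp M k" by (auto simp: Z_iff)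
  show "gadd H k (gzero H k) X = X" using h c hcls_add hcls_zero by simp
next
  fix k X assume "X \<in> cmp H k"
  then obtain x where h: "x \<in> Z k" "X = hcls M d k x" by (auto simp: H_cmp)
  hence c: "x \<in> cmp M k" by (auto simp: Z_iff)
  show "\<exists>Y\<in>cmp H k. gadd H k X Y = gzero H k"
    using h c hcls_add hcls_zero by (intro bexI[of _ X]) (auto simp: H_cmp)
next
  fix i r k X assume a: "r \<in> Rh V w i \<and> X \<in> cmp H k"
  then obtain x where h: "x \<in> Z k" "X = hcls M d k x" by (auto simp: H_cmp)
  hence c: "x \<in> cmp M k" by (auto simp: Z_iff)
  show "gact H i r k X \<in> cmp H (i + k)" using h c a hcls_act Z_act H_cmp by simp
next
  fix i r s k X assume a: "r \<in> Rh V w i \<and> s \<in> Rh V w i \<and> X \<in> cmp H k"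
  then obtain x where h: "x \<in> Z k" "X = hcls M d k x" by (auto simp: H_cmp)
  hence c: "x \<in> cmp M k" by (auto simp: Z_iff)
  show "gact H i (r + s) k X = gadd H (i + k) (gact H i r k X) (gact H i s k X)"
    using h c a hcls_act hcls_add act_radd act_in Rh_add by simp
next
  fix i r k X Y assume a: "r \<in> Rh V w i \<and> X \<in> cmp H k \<and> Y \<in> cmp H k"
  then obtain x y where h: "x \<in> Z k" "y \<in> Z k" "X = hcls M d k x" "Y = hcls M d k y" by (auto simp: H_cmp)
  hence c: "x \<in> cmp M k" "y \<in> cmp M k" by (auto simp: Z_iff)
  show "gact H i r k (gadd H k X Y) = gadd H (i + k) (gact H i r k X) (gact H i r k Y)"
    using h c a hcls_act hcls_add act_vadd act_in by simp
next
  fix i j r s k X assume a: "r \<in> Rh V w i \<and> s \<in> Rh V w j \<and> X \<in> cmp H k"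
  then obtain x where h: "x \<in> Z k" "X = hcls M d k x" by (auto simp: H_cmp)
  hence c: "x \<in> cmp M k" by (auto simp: Z_iff)
  have "gact H (i + j) (r * s) k X = hcls M d (i + j + k) (gact M i r (j + k) (gact M j s k x))"
    using h c a hcls_act act_mult Rh_mult by simp
  moreover have "gact H i r (j + k) (gact H j s k X) = hcls M d (i + (j + k)) (gact M i r (j + k) (gact M j s k x))"
    using h c a hcls_act act_in by simp
  ultimately show "gact H (i + j) (r * s) k X = gact H i r (j + k) (gact H j s k X)" by (simp add: add.assoc)
next
  fix k X assume "X \<in> cmp H k"
  then obtain x where h: "x \<in> Z k" "X = hcls M d k x" by (auto simp: H_cmp)
  hence c: "x \<in> cmp M k" by (auto simp: Z_iff)
  show "gact H 0 1 k X = X" using h c hcls_act[OF Rh_one c] by simp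
qed

lemma lincomb_hcls: "\<forall>(j,z,r)\<in>set xs. z \<in> cmp M j \<and> r \<in> Rh V w (k - j) \<Longrightarrow>
  hcls M d k (lincomb M k xs) = lincomb H k (map (\<lambda>(j,z,r). (j, hcls M d j z, r)) xs)"
proof (induction xs)
  case Nil thus ?case by (simp add: hcls_zero)
next
  case (Cons x xs)
  obtain j z r where x: "x = (j,z,r)" by (cases x) auto
  have h: "z \<in> cmp M j" "r \<in> Rh V w (k - j)" using Cons.prems x by auto
  have o: "ok k xs" using Cons.prems by (auto simp: ok_def)
  have "hcls M d k (lincomb M k (x # xs)) = gadd H k (hcls M d k (gact M (k - j) r j z)) (hcls M d k (lincomb M k xs))"
    using hcls_add[OF term_in[OF h] lincomb_in[OF o]] x by simp
  also have "hcls M d k (gact M (k - j) r j z) = gact H (k - j) r j (hcls M d j z)"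
    using hcls_act[OF h(2) h(1)] by simp
  finally show ?case using Cons x by simp
qed

end




lemma map_triple_id: "(\<forall>(j,b,r)\<in>set xs. f j b = b) \<Longrightarrow> map (\<lambda>(j,b,r). (j, f j b, r)) xs = xs"
  by (induction xs) auto

lemma map_map_triple: "map (\<lambda>(j,z,r). (j, F j z, r)) (map (\<lambda>(j,b,r). (j, G j b, r)) xs) = map (\<lambda>(j,b,r). (j, F j (G j b), r)) xs"
  by (induction xs) auto

lemma map_plus0: "map (\<lambda>(j,b,r). (j + (0::int), G j b, r)) xs = map (\<lambda>(j,b,r). (j, G j b, r)) xs"
  by simp

lemma ball_map_triple: "(\<forall>(j,z,r)\<in>set (map (\<lambda>(j,b,r). (j, G j b, r)) xs). P j z r) = (\<forall>(j,b,r)\<in>set xs. P j (G j b) r)"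
  by (induction xs) auto

lemma map_triple_cong: "(\<forall>(j,b,r)\<in>set xs. F j b = G j b) \<Longrightarrow> map (\<lambda>(j,b,r). (j, F j b, r)) xs = map (\<lambda>(j,b,r). (j, G j b, r)) xs"
  by (induction xs) auto

lemma map_shift: "map (\<lambda>(j,b,r). (j + -1, F j b, r)) (map (\<lambda>(j,b,r). (j + (1::int), G j b, r)) xs) = map (\<lambda>(j,b,r). (j, F (j + 1) (G j b), r)) xs"
  by (induction xs) auto

context dgm begin
lemma Z_lincomb: "\<forall>(j,z,r)\<in>set xs. z \<in> Z j \<and> r \<in> Rh V w (k - j) \<Longrightarrow> lincomb M k xs \<in> Z k"
proof (induction xs)
  case Nil thus ?case by simp
next
  case (Cons x xs)
  obtain j z r where x: "x = (j,z,r)" by (cases x) auto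
  have h: "z \<in> Z j" "r \<in> Rh V w (k - j)" using Cons.prems x by auto
  have "gact M (k - j) r j z \<in> Z (k - j + j)" by (rule Z_act[OF h(2) h(1)])
  hence "gact M (k - j) r j z \<in> Z k" by simp
  thus ?case using Cons x Z_add by simp
qed
end

theorem lemma3p12:
  fixes V :: "nat set" and w :: "nat \<Rightarrow> int"
    and A :: "'a gmod" and dA :: "int \<Rightarrow> 'a \<Rightarrow> 'a"
    and B :: "'b gmod" and dB :: "int \<Rightarrow> 'b \<Rightarrow> 'b"
    and C :: "'c gmod" and dC :: "int \<Rightarrow> 'c \<Rightarrow> 'c"
    and \<alpha> :: "int \<Rightarrow> 'a \<Rightarrow> 'b" and \<beta> :: "int \<Rightarrow> 'b \<Rightarrow> 'c"
  assumes R: "graded_poly_ring V w"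
    and ses: "dg_ses V w A dA B dB C dC \<alpha> \<beta>"
    and freeA: "gfree V w A" and freeB: "gfree V w B" and freeC: "gfree V w C"
    and freeHA: "gfree V w (homology A dA)" and freeHB: "gfree V w (homology B dB)"
  shows "\<exists>s. ghom V w (ker_hmap A dA B dB \<alpha>) (homology C dC) 1 s \<and>
             (\<forall>k X. X \<in> cmp (ker_hmap A dA B dB \<alpha>) k \<longrightarrow>
                connecting A dA B dB \<alpha> \<beta> (k + 1) (s k X) = X)"
proof -
  have dgA: "dgmodule V w A dA" and dgB: "dgmodule V w B dB" and dgC: "dgmodule V w C dC"
    and ghA: "ghom V w A B 0 \<alpha>" and ghB: "ghom V w B C 0 \<beta>"
    and chA: "chain_map A dA dB \<alpha>" and chB: "chain_map B dB dC \<beta>"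
    and inj: "\<And>k. inj_on (\<alpha> k) (cmp A k)" and surj: "\<And>k. \<beta> k ` cmp B k = cmp C k"
    and exact: "\<And>k. {b \<in> cmp B k. \<beta> k b = gzero C k} = \<alpha> k ` cmp A k"
    using ses unfolding dg_ses_def by auto
  interpret A: dgm V w A dA by unfold_locales (use dgA in \<open>auto simp: dgmodule_def\<close>)
  interpret B: dgm V w B dB by unfold_locales (use dgB in \<open>auto simp: dgmodule_def\<close>)
  interpret C: dgm V w C dC by unfold_locales (use dgC in \<open>auto simp: dgmodule_def\<close>)
  interpret HA: gm V w "homology A dA" by unfold_locales (rule A.H_gmodule)
  interpret HB: gm V w "homology B dB" by unfold_locales (rule B.H_gmodule)
  interpret HC: gm V w "homology C dC" by unfold_locales (rule C.H_gmodule)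
  interpret HAA: gm2 V w "homology A dA" A by unfold_locales
  interpret HBB: gm2 V w "homology B dB" B by unfold_locales
  interpret HAB: gm2 V w "homology A dA" B by unfold_locales
  interpret AB: gm2 V w A B by unfold_locales
  interpret BC: gm2 V w B C by unfold_locales
  interpret BB: gm2 V w B B by unfold_locales

  obtain basA where bA: "\<forall>j. basA j \<subseteq> cmp (homology A dA) j"
    and spA: "\<forall>k x. x \<in> cmp (homology A dA) k \<longrightarrow>
        (\<exists>xs. (\<forall>(j, b, r)\<in>set xs. b \<in> basA j \<and> r \<in> Rh V w (k - j)) \<and> x = lincomb (homology A dA) k xs)"
    and inA: "\<forall>k xs. (\<forall>(j, b, r)\<in>set xs. b \<in> basA j \<and> r \<in> Rh V w (k - j)) \<and>
        distinct (map (\<lambda>(j, b, r). (j, b)) xs) \<and> lincomb (homology A dA) k xs = gzero (homology A dA) k \<longrightarrow>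
        (\<forall>(j, b, r)\<in>set xs. r = 0)"
    using freeHA unfolding gfree_def by (elim exE conjE) (rule that)
  obtain basB where bB: "\<forall>j. basB j \<subseteq> cmp (homology B dB) j"
    and spB: "\<forall>k x. x \<in> cmp (homology B dB) k \<longrightarrow>
        (\<exists>xs. (\<forall>(j, b, r)\<in>set xs. b \<in> basB j \<and> r \<in> Rh V w (k - j)) \<and> x = lincomb (homology B dB) k xs)"
    and inB: "\<forall>k xs. (\<forall>(j, b, r)\<in>set xs. b \<in> basB j \<and> r \<in> Rh V w (k - j)) \<and>
        distinct (map (\<lambda>(j, b, r). (j, b)) xs) \<and> lincomb (homology B dB) k xs = gzero (homology B dB) k \<longrightarrow>
        (\<forall>(j, b, r)\<in>set xs. r = 0)"
    using freeHB unfolding gfree_def by (elim exE conjE) (rule that)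
  have bAe: "X \<in> cmp (homology A dA) j" if "X \<in> basA j" for X j using bA that by blast
  have bBe: "X \<in> cmp (homology B dB) j" if "X \<in> basB j" for X j using bB that by blast
  have HAe: "(SOME x. x \<in> X) \<in> zcyc A dA j \<and> hcls A dA j (SOME x. x \<in> X) = X" if "X \<in> basA j" for X j
    using A.H_elem[OF bAe[OF that]] .
  have HBe: "(SOME x. x \<in> X) \<in> zcyc B dB j \<and> hcls B dB j (SOME x. x \<in> X) = X" if "X \<in> basB j" for X j
    using B.H_elem[OF bBe[OF that]] .
  have gA: "(SOME x. x \<in> X) \<in> cmp A (j + 0)" if "X \<in> basA j" for j X
    using HAe[OF that] A.Z_iff by simp
  obtain \<phi> where \<phi>h: "ghom V w (homology A dA) A 0 \<phi>" and \<phi>b: "\<forall>j X. X \<in> basA j \<longrightarrow> \<phi> j X = (SOME x. x \<in> X)"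
    using HAA.free_ext[where g = "\<lambda>j X. SOME x. x \<in> X" and e = 0, OF bA spA inA gA] by blast
  have gB: "(SOME x. x \<in> X) \<in> cmp B (j + 0)" if "X \<in> basB j" for j X
    using HBe[OF that] B.Z_iff by simp
  obtain \<psi> where \<psi>h: "ghom V w (homology B dB) B 0 \<psi>" and \<psi>b: "\<forall>j X. X \<in> basB j \<longrightarrow> \<psi> j X = (SOME x. x \<in> X)"
    using HBB.free_ext[where g = "\<lambda>j X. SOME x. x \<in> X" and e = 0, OF bB spB inB gB] by blast
  have \<phi>e: "\<phi> j X \<in> zcyc A dA j \<and> \<phi> j X \<in> cmp A j \<and> hcls A dA j (\<phi> j X) = X" if "X \<in> basA j" for j X
    using HAe[OF that] \<phi>b that A.Z_iff by simp
  have \<psi>e: "\<psi> j X \<in> zcyc B dB j \<and> \<psi> j X \<in> cmp B j \<and> hcls B dB j (\<psi> j X) = X" if "X \<in> basB j" for j X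
    using HBe[OF that] \<psi>b that B.Z_iff by simp
  have \<phi>p: "\<phi> k X \<in> zcyc A dA k \<and> hcls A dA k (\<phi> k X) = X" if X: "X \<in> cmp (homology A dA) k" for k X
  proof -
    obtain xs where xs: "\<forall>(j,b,r)\<in>set xs. b \<in> basA j \<and> r \<in> Rh V w (k - j)" "X = lincomb (homology A dA) k xs"
      using spA X by blast
    have ok: "HA.ok k xs" using xs(1) bAe unfolding HA.ok_def by fast
    have e: "\<phi> k X = lincomb A k (map (\<lambda>(j,b,r). (j, \<phi> j b, r)) xs)"
      using HAA.ghom_lincomb[OF \<phi>h ok] xs(2) by (simp only: map_plus0 add_0_right)
    have ent: "\<forall>(j,z,r)\<in>set (map (\<lambda>(j,b,r). (j, \<phi> j b, r)) xs). z \<in> zcyc A dA j \<and> r \<in> Rh V w (k - j)"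
      unfolding ball_map_triple using xs(1) \<phi>e by fast
    have Z: "\<phi> k X \<in> zcyc A dA k" using A.Z_lincomb[OF ent] e by simp
    have ent2: "\<forall>(j,z,r)\<in>set (map (\<lambda>(j,b,r). (j, \<phi> j b, r)) xs). z \<in> cmp A j \<and> r \<in> Rh V w (k - j)"
      unfolding ball_map_triple using xs(1) \<phi>e by fast
    have "hcls A dA k (\<phi> k X) = lincomb (homology A dA) k (map (\<lambda>(j,b,r). (j, hcls A dA j (\<phi> j b), r)) xs)"
      using A.lincomb_hcls[OF ent2] e by (simp only: map_map_triple)
    also have "map (\<lambda>(j,b,r). (j, hcls A dA j (\<phi> j b), r)) xs = xs"
      using xs(1) \<phi>e by (intro map_triple_id) fast
    finally show ?thesis using Z xs(2) by simp
  qed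
  have \<psi>p: "\<psi> k X \<in> zcyc B dB k \<and> hcls B dB k (\<psi> k X) = X" if X: "X \<in> cmp (homology B dB) k" for k X
  proof -
    obtain xs where xs: "\<forall>(j,b,r)\<in>set xs. b \<in> basB j \<and> r \<in> Rh V w (k - j)" "X = lincomb (homology B dB) k xs"
      using spB X by blast
    have ok: "HB.ok k xs" using xs(1) bBe unfolding HB.ok_def by fast
    have e: "\<psi> k X = lincomb B k (map (\<lambda>(j,b,r). (j, \<psi> j b, r)) xs)"
      using HBB.ghom_lincomb[OF \<psi>h ok] xs(2) by (simp only: map_plus0 add_0_right)
    have ent: "\<forall>(j,z,r)\<in>set (map (\<lambda>(j,b,r). (j, \<psi> j b, r)) xs). z \<in> zcyc B dB j \<and> r \<in> Rh V w (k - j)"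
      unfolding ball_map_triple using xs(1) \<psi>e by fast
    have Z: "\<psi> k X \<in> zcyc B dB k" using B.Z_lincomb[OF ent] e by simp
    have ent2: "\<forall>(j,z,r)\<in>set (map (\<lambda>(j,b,r). (j, \<psi> j b, r)) xs). z \<in> cmp B j \<and> r \<in> Rh V w (k - j)"
      unfolding ball_map_triple using xs(1) \<psi>e by fast
    have "hcls B dB k (\<psi> k X) = lincomb (homology B dB) k (map (\<lambda>(j,b,r). (j, hcls B dB j (\<psi> j b), r)) xs)"
      using B.lincomb_hcls[OF ent2] e by (simp only: map_map_triple)
    also have "map (\<lambda>(j,b,r). (j, hcls B dB j (\<psi> j b), r)) xs = xs"
      using xs(1) \<psi>e by (intro map_triple_id) fast
    finally show ?thesis using Z xs(2) by simp
  qed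
  have \<alpha>_in: "\<alpha> k x \<in> cmp B k" if "x \<in> cmp A k" for k x
    using ghA that unfolding ghom_def by (metis add_0_right)
  have \<alpha>_add: "\<alpha> k (gadd A k x y) = gadd B k (\<alpha> k x) (\<alpha> k y)" if "x \<in> cmp A k" "y \<in> cmp A k" for k x y
    using ghA that unfolding ghom_def by (metis add_0_right)
  have \<alpha>_ch: "dB k (\<alpha> k x) = \<alpha> (k - 1) (dA k x)" if "x \<in> cmp A k" for k x
    using chA that unfolding chain_map_def by blast
  have \<alpha>_zero: "\<alpha> k (gzero A k) = gzero B k" for k using AB.ghom_zero[OF ghA] by simp
  have \<alpha>Z: "\<alpha> k x \<in> zcyc B dB k" if "x \<in> zcyc A dA k" for k x
    using that \<alpha>_in \<alpha>_ch \<alpha>_zero by (simp add: A.Z_iff B.Z_iff)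
  have \<alpha>Bd: "\<alpha> k x \<in> bdry B dB k" if x: "x \<in> bdry A dA k" for k x
  proof -
    obtain c where c: "c \<in> cmp A (k + 1)" "x = dA (k + 1) c" using x unfolding A.Bd_iff by blast
    have "\<alpha> k x = dB (k + 1) (\<alpha> (k + 1) c)" using \<alpha>_ch[OF c(1)] c by simp
    thus ?thesis unfolding B.Bd_iff using \<alpha>_in[OF c(1)] by blast
  qed
  have \<beta>_in: "\<beta> k x \<in> cmp C k" if "x \<in> cmp B k" for k x
    using ghB that unfolding ghom_def by (metis add_0_right)
  have \<beta>_add: "\<beta> k (gadd B k x y) = gadd C k (\<beta> k x) (\<beta> k y)" if "x \<in> cmp B k" "y \<in> cmp B k" for k x y
    using ghB that unfolding ghom_def by (metis add_0_right)
  have \<beta>_ch: "dC k (\<beta> k x) = \<beta> (k - 1) (dB k x)" if "x \<in> cmp B k" for k x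
    using chB that unfolding chain_map_def by blast
  have \<beta>\<alpha>: "\<beta> k (\<alpha> k a) = gzero C k" if "a \<in> cmp A k" for k a
  proof -
    have "\<alpha> k a \<in> \<alpha> k ` cmp A k" using that by (rule imageI)
    hence "\<alpha> k a \<in> {b \<in> cmp B k. \<beta> k b = gzero C k}" by (simp only: exact)
    thus ?thesis by simp
  qed
  have ex_\<alpha>: "\<exists>a\<in>cmp A k. b = \<alpha> k a" if "b \<in> cmp B k" "\<beta> k b = gzero C k" for k b
  proof -
    have "b \<in> {b \<in> cmp B k. \<beta> k b = gzero C k}" using that by simp
    hence "b \<in> \<alpha> k ` cmp A k" by (simp only: exact)
    thus ?thesis by blast
  qed
  define u where "u j X = \<alpha> j (\<phi> j X)" for j X
  define v where "v j X = \<psi> j (hcls B dB j (u j X))" for j X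
  have uv: "u j X \<in> zcyc B dB j \<and> v j X \<in> zcyc B dB j \<and> u j X \<in> cmp B j \<and> v j X \<in> cmp B j \<and>
       hcls B dB j (u j X) \<in> cmp (homology B dB) j \<and>
       (\<exists>y\<in>cmp B (j + 1). gadd B j (u j X) (v j X) = dB (j + 1) y)"
    if "X \<in> cmp (homology A dA) j" for j X
  proof -
    have uZ: "u j X \<in> zcyc B dB j" unfolding u_def using \<alpha>Z \<phi>p[OF that] by blast
    hence Y: "hcls B dB j (u j X) \<in> cmp (homology B dB) j" using B.H_cmp by simp
    have vZ: "v j X \<in> zcyc B dB j" and hv: "hcls B dB j (v j X) = hcls B dB j (u j X)"
      unfolding v_def using \<psi>p[OF Y] by auto
    have "gadd B j (u j X) (v j X) \<in> bdry B dB j"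
      using B.hcls_eq_iff[of "u j X" j "v j X"] uZ vZ hv B.Z_iff by simp
    thus ?thesis using uZ vZ Y B.Bd_iff B.Z_iff by blast
  qed
  define gl where "gl j X = (SOME y. y \<in> cmp B (j + 1) \<and> dB (j + 1) y = gadd B j (u j X) (v j X))" for j X
  have gl: "gl j X \<in> cmp B (j + 1) \<and> dB (j + 1) (gl j X) = gadd B j (u j X) (v j X)"
    if X: "X \<in> cmp (homology A dA) j" for j X
  proof -
    obtain y where "y \<in> cmp B (j + 1)" "gadd B j (u j X) (v j X) = dB (j + 1) y" using uv[OF X] by blast
    hence "\<exists>y. y \<in> cmp B (j + 1) \<and> dB (j + 1) y = gadd B j (u j X) (v j X)" by metis
    thus ?thesis unfolding gl_def by (rule someI_ex)
  qed
  have gl': "gl j X \<in> cmp B (j + 1)" if "X \<in> basA j" for j X using gl bAe that by blast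
  obtain L where Lh: "ghom V w (homology A dA) B 1 L" and Lb: "\<forall>j X. X \<in> basA j \<longrightarrow> L j X = gl j X"
    using HAB.free_ext[where g = gl and e = 1, OF bA spA inA gl'] by blast
  have Lid: "dB (k + 1) (L k X) = gadd B k (u k X) (v k X)" if X: "X \<in> cmp (homology A dA) k" for k X
  proof -
    obtain xs where xs: "\<forall>(j,b,r)\<in>set xs. b \<in> basA j \<and> r \<in> Rh V w (k - j)" "X = lincomb (homology A dA) k xs"
      using spA X by blast
    have ok: "HA.ok k xs" using xs(1) bAe unfolding HA.ok_def by fast
    have eL: "L k X = lincomb B (k + 1) (map (\<lambda>(j,b,r). (j + 1, L j b, r)) xs)"
      using HAB.ghom_lincomb[OF Lh ok] xs(2) by simp
    have okl: "B.ok (k + 1) (map (\<lambda>(j,b,r). (j + 1, L j b, r)) xs)"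
      using xs(1) Lb gl' unfolding B.ok_def by (auto simp: split_def)
    have e1: "dB (k + 1) (L k X) = lincomb B k (map (\<lambda>(j,b,r). (j, dB (j + 1) (L j b), r)) xs)"
      using BB.ghom_lincomb[OF B.d_ghom okl] eL by (simp only: map_shift) simp
    have e\<phi>: "\<phi> k X = lincomb A k (map (\<lambda>(j,b,r). (j, \<phi> j b, r)) xs)"
      using HAA.ghom_lincomb[OF \<phi>h ok] xs(2) by (simp only: map_plus0 add_0_right)
    have ok\<phi>: "A.ok k (map (\<lambda>(j,b,r). (j, \<phi> j b, r)) xs)"
      unfolding A.ok_def ball_map_triple using xs(1) \<phi>e by fast
    have eu: "u k X = lincomb B k (map (\<lambda>(j,b,r). (j, u j b, r)) xs)"
      using AB.ghom_lincomb[OF ghA ok\<phi>] e\<phi> unfolding u_def by (simp only: map_map_triple map_plus0 add_0_right)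
    have entu: "\<forall>(j,z,r)\<in>set (map (\<lambda>(j,b,r). (j, u j b, r)) xs). z \<in> cmp B j \<and> r \<in> Rh V w (k - j)"
      unfolding ball_map_triple using xs(1) uv bAe by fast
    have eh: "hcls B dB k (u k X) = lincomb (homology B dB) k (map (\<lambda>(j,b,r). (j, hcls B dB j (u j b), r)) xs)"
      using B.lincomb_hcls[OF entu] eu by (simp only: map_map_triple)
    have okh: "HB.ok k (map (\<lambda>(j,b,r). (j, hcls B dB j (u j b), r)) xs)"
      unfolding HB.ok_def ball_map_triple using xs(1) uv bAe by fast
    have ev: "v k X = lincomb B k (map (\<lambda>(j,b,r). (j, v j b, r)) xs)"
      using HBB.ghom_lincomb[OF \<psi>h okh] eh unfolding v_def by (simp only: map_map_triple map_plus0 add_0_right)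
    have entuv: "\<forall>(j,b,r)\<in>set xs. u j b \<in> cmp B j \<and> v j b \<in> cmp B j \<and> r \<in> Rh V w (k - j)"
      using xs(1) uv bAe by fast
    have "gadd B k (u k X) (v k X) = lincomb B k (map (\<lambda>(j,b,r). (j, gadd B j (u j b) (v j b), r)) xs)"
      using B.lincomb_pw_add[where u = u and v = v, OF entuv] eu ev by simp
    also have "map (\<lambda>(j,b,r). (j, gadd B j (u j b) (v j b), r)) xs = map (\<lambda>(j,b,r). (j, dB (j + 1) (L j b), r)) xs"
      using xs(1) Lb gl bAe by (intro map_triple_cong) fastforce
    finally show ?thesis using e1 by simp
  qed
  have Lin: "L k X \<in> cmp B (k + 1)" if "X \<in> cmp (homology A dA) k" for k X
    using Lh that unfolding ghom_def by blast
  have Kcmp: "X \<in> cmp (ker_hmap A dA B dB \<alpha>) k \<longleftrightarrow> X \<in> cmp (homology A dA) k \<and> hmap B dB 0 \<alpha> k X = gzero (homology B dB) k" for k X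
    by (simp add: ker_hmap_def)
  have key: "dB (k + 1) (L k X) = \<alpha> k (\<phi> k X)" if XK: "X \<in> cmp (ker_hmap A dA B dB \<alpha>) k" for k X
  proof -
    have X: "X \<in> cmp (homology A dA) k" and hm: "hmap B dB 0 \<alpha> k X = gzero (homology B dB) k"
      using XK Kcmp by auto
    define x0 where "x0 = (SOME x. x \<in> X)"
    have x0: "x0 \<in> zcyc A dA k" "hcls A dA k x0 = X" using A.H_elem[OF X] x0_def by auto
    have ph: "\<phi> k X \<in> zcyc A dA k" "hcls A dA k (\<phi> k X) = X" using \<phi>p[OF X] by auto
    have c: "x0 \<in> cmp A k" "\<phi> k X \<in> cmp A k" using x0 ph A.Z_iff by auto
    have "gadd A k x0 (\<phi> k X) \<in> bdry A dA k" using A.hcls_eq_iff[OF c] x0 ph by simp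
    hence "\<alpha> k (gadd A k x0 (\<phi> k X)) \<in> bdry B dB k" by (rule \<alpha>Bd)
    hence "gadd B k (\<alpha> k x0) (\<alpha> k (\<phi> k X)) \<in> bdry B dB k" using \<alpha>_add[OF c] by simp
    hence "hcls B dB k (\<alpha> k x0) = hcls B dB k (\<alpha> k (\<phi> k X))"
      using B.hcls_eq_iff \<alpha>_in c by blast
    moreover have "hcls B dB k (\<alpha> k x0) = gzero (homology B dB) k" using hm unfolding hmap_def x0_def by simp
    ultimately have "hcls B dB k (u k X) = gzero (homology B dB) k" unfolding u_def by simp
    hence "v k X = gzero B k" unfolding v_def using HBB.ghom_zero[OF \<psi>h, of k] by simp
    moreover have "u k X \<in> cmp B k" using uv[OF X] by blast
    ultimately show ?thesis using Lid[OF X] unfolding u_def by simp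
  qed
  have zZ: "\<beta> (k + 1) (L k X) \<in> zcyc C dC (k + 1)" if XK: "X \<in> cmp (ker_hmap A dA B dB \<alpha>) k" for k X
  proof -
    have X: "X \<in> cmp (homology A dA) k" using XK Kcmp by auto
    have "dC (k + 1) (\<beta> (k + 1) (L k X)) = \<beta> (k + 1 - 1) (dB (k + 1) (L k X))" by (rule \<beta>_ch[OF Lin[OF X]])
    also have "\<dots> = \<beta> k (\<alpha> k (\<phi> k X))" using key[OF XK] by simp
    also have "\<dots> = gzero C k" using \<beta>\<alpha> \<phi>p[OF X] A.Z_iff by blast
    finally show ?thesis using \<beta>_in[OF Lin[OF X]] by (simp add: C.Z_iff)
  qed
  define s where "s k X = hcls C dC (k + 1) (\<beta> (k + 1) (L k X))" for k X
  have "ghom V w (ker_hmap A dA B dB \<alpha>) (homology C dC) 1 s"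
    unfolding ghom_def
  proof (intro conjI allI impI)
    fix k X assume XK: "X \<in> cmp (ker_hmap A dA B dB \<alpha>) k"
    show "s k X \<in> cmp (homology C dC) (k + 1)" unfolding s_def C.H_cmp using zZ[OF XK] by (rule imageI)
  next
    fix k X Y assume a: "X \<in> cmp (ker_hmap A dA B dB \<alpha>) k \<and> Y \<in> cmp (ker_hmap A dA B dB \<alpha>) k"
    have X: "X \<in> cmp (homology A dA) k" and Y: "Y \<in> cmp (homology A dA) k" using a Kcmp by auto
    have "L k (gadd (homology A dA) k X Y) = gadd B (k + 1) (L k X) (L k Y)"
      using Lh X Y unfolding ghom_def by blast
    hence "\<beta> (k + 1) (L k (gadd (homology A dA) k X Y)) = gadd C (k + 1) (\<beta> (k + 1) (L k X)) (\<beta> (k + 1) (L k Y))"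
      using \<beta>_add[OF Lin[OF X] Lin[OF Y]] by simp
    moreover have "gadd (ker_hmap A dA B dB \<alpha>) k X Y = gadd (homology A dA) k X Y" by (simp add: ker_hmap_def)
    moreover have "gadd (homology C dC) (k + 1) (s k X) (s k Y) = hcls C dC (k + 1) (gadd C (k + 1) (\<beta> (k + 1) (L k X)) (\<beta> (k + 1) (L k Y)))"
      unfolding s_def by (rule C.hcls_add[OF \<beta>_in[OF Lin[OF X]] \<beta>_in[OF Lin[OF Y]]])
    ultimately show "s k (gadd (ker_hmap A dA B dB \<alpha>) k X Y) = gadd (homology C dC) (k + 1) (s k X) (s k Y)"
      unfolding s_def by simp
  next
    fix i r k X assume a: "r \<in> Rh V w i \<and> X \<in> cmp (ker_hmap A dA B dB \<alpha>) k"
    have X: "X \<in> cmp (homology A dA) k" and r: "r \<in> Rh V w i" using a Kcmp by auto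
    have e1: "L (i + k) (gact (homology A dA) i r k X) = gact B i r (k + 1) (L k X)"
      using Lh X r unfolding ghom_def by blast
    have e2: "\<beta> (i + (k + 1)) (gact B i r (k + 1) (L k X)) = gact C i r (k + 1) (\<beta> (k + 1) (L k X))"
      using ghB r Lin[OF X] unfolding ghom_def by (metis add_0_right)
    have e3: "gact (homology C dC) i r (k + 1) (s k X) = hcls C dC (i + (k + 1)) (gact C i r (k + 1) (\<beta> (k + 1) (L k X)))"
      unfolding s_def by (rule C.hcls_act[OF r \<beta>_in[OF Lin[OF X]]])
    have kk: "i + k + 1 = i + (k + 1)" by simp
    have "gact (ker_hmap A dA B dB \<alpha>) i r k X = gact (homology A dA) i r k X" by (simp add: ker_hmap_def)
    thus "s (i + k) (gact (ker_hmap A dA B dB \<alpha>) i r k X) = gact (homology C dC) i r (k + 1) (s k X)"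
      unfolding s_def kk using e1 e2 e3[unfolded s_def] by simp
  qed
  moreover have "connecting A dA B dB \<alpha> \<beta> (k + 1) (s k X) = X"
    if XK: "X \<in> cmp (ker_hmap A dA B dB \<alpha>) k" for k X
  proof -
    have X: "X \<in> cmp (homology A dA) k" using XK Kcmp by auto
    define y where "y = L k X"
    define z where "z = \<beta> (k + 1) y"
    have y: "y \<in> cmp B (k + 1)" using Lin[OF X] y_def by simp
    have z: "z \<in> cmp C (k + 1)" using \<beta>_in[OF y] z_def by simp
    define c0 where "c0 = (SOME c. c \<in> s k X)"
    obtain bc where bc: "bc \<in> bdry C dC (k + 1)" "c0 = gadd C (k + 1) z bc"
      using C.some_hcls[OF z] unfolding c0_def s_def y_def z_def by blast
    obtain c' where c': "c' \<in> cmp C (k + 1 + 1)" "bc = dC (k + 1 + 1) c'" using bc(1) unfolding C.Bd_iff by blast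
    obtain b' where b': "b' \<in> cmp B (k + 1 + 1)" "c' = \<beta> (k + 1 + 1) b'" using c'(1) surj[of "k + 1 + 1"] by blast
    define db where "db = dB (k + 1 + 1) b'"
    have k2: "k + 1 + 1 - 1 = k + 1" by simp
    have db: "db \<in> cmp B (k + 1)" using B.d_in[OF b'(1)] unfolding db_def k2 .
    have \<beta>db: "\<beta> (k + 1) db = bc"
    proof -
      have "dC (k + 1 + 1) (\<beta> (k + 1 + 1) b') = \<beta> (k + 1 + 1 - 1) db" using \<beta>_ch[OF b'(1)] db_def by simp
      thus ?thesis using c' b' unfolding k2 by simp
    qed
    define y' where "y' = gadd B (k + 1) y db"
    have y': "y' \<in> cmp B (k + 1)" using y db y'_def by simp
    have \<beta>y': "\<beta> (k + 1) y' = c0" using \<beta>_add[OF y db] \<beta>db bc z_def y'_def by simp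
    define b0 where "b0 = (SOME b. b \<in> cmp B (k + 1) \<and> \<beta> (k + 1) b = c0)"
    have b0: "b0 \<in> cmp B (k + 1) \<and> \<beta> (k + 1) b0 = c0"
      unfolding b0_def by (rule someI[of _ y']) (use y' \<beta>y' in blast)
    have c0C: "c0 \<in> cmp C (k + 1)" using \<beta>y' \<beta>_in[OF y'] by simp
    have "\<beta> (k + 1) (gadd B (k + 1) b0 y') = gzero C (k + 1)"
      using \<beta>_add[of b0 "k + 1" y'] b0 y' \<beta>y' c0C by simp
    then obtain a2 where a2: "a2 \<in> cmp A (k + 1)" "gadd B (k + 1) b0 y' = \<alpha> (k + 1) a2"
      using ex_\<alpha>[of "gadd B (k + 1) b0 y'" "k + 1"] b0 y' by auto
    have "gadd B (k + 1) (gadd B (k + 1) b0 y') y' = b0"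
      using B.assoc[of b0 "k + 1" y' y'] b0 y' by simp
    hence b0e: "b0 = gadd B (k + 1) (\<alpha> (k + 1) a2) y'" using a2 by simp
    have d1: "dB (k + 1) (\<alpha> (k + 1) a2) = \<alpha> k (dA (k + 1) a2)" using \<alpha>_ch[OF a2(1)] by simp
    have d2: "dB (k + 1) db = gzero B k"
    proof -
      have "k + 1 + 1 - 2 = k" by simp
      thus ?thesis using B.dd[OF b'(1)] unfolding db_def k2 by simp
    qed
    have d3: "dB (k + 1) y = \<alpha> k (\<phi> k X)" using key[OF XK] y_def by simp
    have da: "dA (k + 1) a2 \<in> cmp A k" using A.d_in[OF a2(1)] by simp
    have phc: "\<phi> k X \<in> cmp A k" using \<phi>p[OF X] A.Z_iff by blast
    have "dB (k + 1) y' = \<alpha> k (\<phi> k X)"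
      using B.d_add[OF y db] d2 d3 \<alpha>_in[OF phc] y'_def by simp
    hence "dB (k + 1) b0 = gadd B k (\<alpha> k (dA (k + 1) a2)) (\<alpha> k (\<phi> k X))"
      using b0e B.d_add[OF \<alpha>_in[OF a2(1)] y'] d1 by simp
    also have "\<dots> = \<alpha> k (gadd A k (dA (k + 1) a2) (\<phi> k X))" using \<alpha>_add[OF da phc] by simp
    finally have db0: "dB (k + 1) b0 = \<alpha> k (gadd A k (dA (k + 1) a2) (\<phi> k X))" .
    define astar where "astar = gadd A k (dA (k + 1) a2) (\<phi> k X)"
    have astar: "astar \<in> cmp A k" using da phc astar_def by simp
    define a0 where "a0 = (SOME a. a \<in> cmp A k \<and> \<alpha> k a = dB (k + 1) b0)"
    have a0: "a0 \<in> cmp A k \<and> \<alpha> k a0 = dB (k + 1) b0"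
    proof -
      have "astar \<in> cmp A k \<and> \<alpha> k astar = dB (k + 1) b0" using astar db0 unfolding astar_def by simp
      thus ?thesis unfolding a0_def by (rule someI)
    qed
    have a0e: "a0 = astar" using inj[of k] a0 astar db0 unfolding inj_on_def astar_def by metis
    have conn: "connecting A dA B dB \<alpha> \<beta> (k + 1) (s k X) = hcls A dA k a0"
      unfolding connecting_def a0_def b0_def c0_def by simp
    have bd: "dA (k + 1) a2 \<in> bdry A dA k" unfolding A.Bd_iff using a2(1) by blast
    have "hcls A dA k astar = hcls A dA k (gadd A k (\<phi> k X) (dA (k + 1) a2))"
      using A.comm[OF da phc] astar_def by simp
    also have "\<dots> = hcls A dA k (\<phi> k X)" by (rule A.hcls_add_bd[OF phc bd])
    also have "\<dots> = X" using \<phi>p[OF X] by blast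
    finally show ?thesis using conn a0e by simp
  qed
  ultimately show ?thesis by blast
qed

end
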